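(* Let $\mathbb A$ be an abelian category with enough projective objects. Let $(f_0,f_1):a\to b$ be a morphism in $\mathbb A^{[1]}_c$ and let $g:\mathrm{Ker}(a)\to\mathrm{Ker}(b)$ and $h:\mathrm{Coker}(a)\to\mathrm{Coker}(b)$ be the induced morphisms. Then $(f_0,f_1)$ is fully cofaithful in $\mathbb A^{[1]}_c$ if and only if $h$ is an isomorphism and $g$ is an epimorphism in $\mathbb A$.
   Context: Let $\mathbb A$ be an abelian category. The 2-category $\mathbb A^{[1]}$ has as objects the morphisms $a:A_1\to A_0$ of $\mathbb A$. For objects $a:A_1\to A_0$ and $b:B_1\to B_0$, a morphism $a\to b$ is a pair $(f_0,f_1)$ of morphisms $f_i:A_i\to B_i$ of $\mathbb A$ with $b f_1=f_0 a$; composition is componentwise. A 2-arrow $(f_0,f_1)\Rightarrow(g_0,g_1)$ between morphisms $a\to b$ is a morphism $\alpha:A_0\to B_1$ of $\mathbb A$ with $f_1-g_1=\alpha a$ and $f_0-g_0=b\alpha$; vertical composition is addition of such $\alpha$'s, and whiskering is given by $(h_0,h_1)\circ\alpha=h_1\alpha$ and $\alpha\circ(e_0,e_1)=\alpha e_0$. All 2-arrows are invertible, so each $\mathbf{Hom}(a,b)$ is a groupoid. $\mathbb A^{[1]}_c$ is the full 2-subcategory of $\mathbb A^{[1]}$ on the objects $a:A_1\to A_0$ with $A_0$ projective in $\mathbb A$. A morphism $(f_0,f_1):a\to b$ induces $g:\mathrm{Ker}(a)\to\mathrm{Ker}(b)$ (restriction of $f_1$) and $h:\mathrm{Coker}(a)\to\mathrm{Coker}(b)$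 (induced by $f_0$). A morphism $f:a\to b$ of $\mathbb A^{[1]}_c$ is fully cofaithful in $\mathbb A^{[1]}_c$ if for every object $x$ of $\mathbb A^{[1]}_c$ the functor $-\circ f:\mathbf{Hom}(b,x)\to\mathbf{Hom}(a,x)$ is full and faithful. *)

theory Defs
  imports Main
begin

record ('o, 'm) cat =
  Ob  :: "'o set"
  Ar  :: "'m set"
  dom :: "'m \<Rightarrow> 'o"
  cod :: "'m \<Rightarrow> 'o"
  idm :: "'o \<Rightarrow> 'm"
  cmp :: "'m \<Rightarrow> 'm \<Rightarrow> 'm"      (* cmp C g f = g \<circ> f *)
  add :: "'m \<Rightarrow> 'm \<Rightarrow> 'm"
  neg :: "'m \<Rightarrow> 'm"
  zer :: "'o \<Rightarrow> 'o \<Rightarrow> 'm"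

definition hom :: "('o,'m) cat \<Rightarrow> 'o \<Rightarrow> 'o \<Rightarrow> 'm set" where
  "hom C A B = {f \<in> Ar C. dom C f = A \<and> cod C f = B}"

definition sub :: "('o,'m) cat \<Rightarrow> 'm \<Rightarrow> 'm \<Rightarrow> 'm" where
  "sub C f g = add C f (neg C g)"

definition category :: "('o,'m) cat \<Rightarrow> bool" where
  "category C \<longleftrightarrow>
     (\<forall>f\<in>Ar C. dom C f \<in> Ob C \<and> cod C f \<in> Ob C) \<and>
     (\<forall>A\<in>Ob C. idm C A \<in> hom C A A) \<and>
     (\<forall>A B D f g. f \<in> hom C A B \<longrightarrow> g \<in> hom C B D \<longrightarrow> cmp C g f \<in> hom C A D) \<and>
     (\<forall>A B D E f g h. f \<in> hom C A B \<longrightarrow> g \<in> hom C B D \<longrightarrow> h \<in> hom C D E \<longrightarrow>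
         cmp C h (cmp C g f) = cmp C (cmp C h g) f) \<and>
     (\<forall>A B f. f \<in> hom C A B \<longrightarrow> cmp C f (idm C A) = f \<and> cmp C (idm C B) f = f)"

definition preadditive :: "('o,'m) cat \<Rightarrow> bool" where
  "preadditive C \<longleftrightarrow> category C \<and>
     (\<forall>A\<in>Ob C. \<forall>B\<in>Ob C.
        zer C A B \<in> hom C A B \<and>
        (\<forall>f\<in>hom C A B. \<forall>g\<in>hom C A B.
           add C f g \<in> hom C A B \<and> add C f g = add C g f) \<and>
        (\<forall>f\<in>hom C A B. \<forall>g\<in>hom C A B. \<forall>h\<in>hom C A B.
           add C (add C f g) h = add C f (add C g h)) \<and>
        (\<forall>f\<in>hom C A B. add C f (zer C A B) = f \<and> neg C f \<in> hom C A B \<and>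
           add C f (neg C f) = zer C A B)) \<and>
     (\<forall>A B D f f' g. f \<in> hom C A B \<longrightarrow> f' \<in> hom C A B \<longrightarrow> g \<in> hom C B D \<longrightarrow>
         cmp C g (add C f f') = add C (cmp C g f) (cmp C g f')) \<and>
     (\<forall>A B D f g g'. f \<in> hom C A B \<longrightarrow> g \<in> hom C B D \<longrightarrow> g' \<in> hom C B D \<longrightarrow>
         cmp C (add C g g') f = add C (cmp C g f) (cmp C g' f))"

definition mono :: "('o,'m) cat \<Rightarrow> 'm \<Rightarrow> bool" where
  "mono C m \<longleftrightarrow> m \<in> Ar C \<and>
     (\<forall>X u v. u \<in> hom C X (dom C m) \<longrightarrow> v \<in> hom C X (dom C m) \<longrightarrow>
        cmp C m u = cmp C m v \<longrightarrow> u = v)"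

definition epi :: "('o,'m) cat \<Rightarrow> 'm \<Rightarrow> bool" where
  "epi C e \<longleftrightarrow> e \<in> Ar C \<and>
     (\<forall>X u v. u \<in> hom C (cod C e) X \<longrightarrow> v \<in> hom C (cod C e) X \<longrightarrow>
        cmp C u e = cmp C v e \<longrightarrow> u = v)"

definition iso :: "('o,'m) cat \<Rightarrow> 'm \<Rightarrow> bool" where
  "iso C f \<longleftrightarrow> f \<in> Ar C \<and>
     (\<exists>g \<in> hom C (cod C f) (dom C f).
        cmp C g f = idm C (dom C f) \<and> cmp C f g = idm C (cod C f))"

definition is_kernel :: "('o,'m) cat \<Rightarrow> 'm \<Rightarrow> 'm \<Rightarrow> bool" where
  "is_kernel C f k \<longleftrightarrow> f \<in> Ar C \<and> k \<in> Ar C \<and> cod C k = dom C f \<and>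
     cmp C f k = zer C (dom C k) (cod C f) \<and>
     (\<forall>t. t \<in> Ar C \<longrightarrow> cod C t = dom C f \<longrightarrow> cmp C f t = zer C (dom C t) (cod C f) \<longrightarrow>
        (\<exists>!u. u \<in> hom C (dom C t) (dom C k) \<and> cmp C k u = t))"

definition is_cokernel :: "('o,'m) cat \<Rightarrow> 'm \<Rightarrow> 'm \<Rightarrow> bool" where
  "is_cokernel C f c \<longleftrightarrow> f \<in> Ar C \<and> c \<in> Ar C \<and> dom C c = cod C f \<and>
     cmp C c f = zer C (dom C f) (cod C c) \<and>
     (\<forall>t. t \<in> Ar C \<longrightarrow> dom C t = cod C f \<longrightarrow> cmp C t f = zer C (dom C f) (cod C t) \<longrightarrow>
        (\<exists>!u. u \<in> hom C (cod C c) (cod C t) \<and> cmp C u c = t))"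

definition abelian :: "('o,'m) cat \<Rightarrow> bool" where
  "abelian C \<longleftrightarrow> preadditive C \<and>
     (\<exists>Z\<in>Ob C. \<forall>A\<in>Ob C. hom C Z A = {zer C Z A} \<and> hom C A Z = {zer C A Z}) \<and>
     (\<forall>A\<in>Ob C. \<forall>B\<in>Ob C. \<exists>P p1 p2. p1 \<in> hom C P A \<and> p2 \<in> hom C P B \<and>
        (\<forall>X f g. f \<in> hom C X A \<longrightarrow> g \<in> hom C X B \<longrightarrow>
           (\<exists>!u. u \<in> hom C X P \<and> cmp C p1 u = f \<and> cmp C p2 u = g))) \<and>
     (\<forall>f\<in>Ar C. \<exists>k. is_kernel C f k) \<and>
     (\<forall>f\<in>Ar C. \<exists>c. is_cokernel C f c) \<and>
     (\<forall>m. mono C m \<longrightarrow> (\<exists>f. is_kernel C f m)) \<and>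
     (\<forall>e. epi C e \<longrightarrow> (\<exists>f. is_cokernel C f e))"

definition projective :: "('o,'m) cat \<Rightarrow> 'o \<Rightarrow> bool" where
  "projective C P \<longleftrightarrow> P \<in> Ob C \<and>
     (\<forall>e f. epi C e \<longrightarrow> f \<in> hom C P (cod C e) \<longrightarrow>
        (\<exists>g \<in> hom C P (dom C e). cmp C e g = f))"

definition enough_projectives :: "('o,'m) cat \<Rightarrow> bool" where
  "enough_projectives C \<longleftrightarrow>
     (\<forall>A\<in>Ob C. \<exists>P e. projective C P \<and> e \<in> hom C P A \<and> epi C e)"

text \<open>Objects of A^[1]_c: arrows a : A1 \<rightarrow> A0 with A0 projective.\<close>
definition obj_c :: "('o,'m) cat \<Rightarrow> 'm \<Rightarrow> bool" where
  "obj_c C a \<longleftrightarrow> a \<in> Ar C \<and> projective C (cod C a)"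

text \<open>A morphism (f0,f1) : a \<rightarrow> b, with f_i : A_i \<rightarrow> B_i and b f1 = f0 a.\<close>
definition mor1 :: "('o,'m) cat \<Rightarrow> 'm \<Rightarrow> 'm \<Rightarrow> 'm \<times> 'm \<Rightarrow> bool" where
  "mor1 C a b f \<longleftrightarrow> a \<in> Ar C \<and> b \<in> Ar C \<and>
     fst f \<in> hom C (cod C a) (cod C b) \<and> snd f \<in> hom C (dom C a) (dom C b) \<and>
     cmp C b (snd f) = cmp C (fst f) a"

text \<open>A 2-arrow alpha : (f0,f1) \<Rightarrow> (g0,g1) between morphisms a \<rightarrow> b.\<close>
definition arr2 :: "('o,'m) cat \<Rightarrow> 'm \<Rightarrow> 'm \<Rightarrow> 'm \<times> 'm \<Rightarrow> 'm \<times> 'm \<Rightarrow> 'm \<Rightarrow> bool" where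
  "arr2 C a b f g \<alpha> \<longleftrightarrow> mor1 C a b f \<and> mor1 C a b g \<and>
     \<alpha> \<in> hom C (cod C a) (dom C b) \<and>
     sub C (snd f) (snd g) = cmp C \<alpha> a \<and> sub C (fst f) (fst g) = cmp C b \<alpha>"

definition comp1 :: "('o,'m) cat \<Rightarrow> 'm \<times> 'm \<Rightarrow> 'm \<times> 'm \<Rightarrow> 'm \<times> 'm" where
  "comp1 C u f = (cmp C (fst u) (fst f), cmp C (snd u) (snd f))"

text \<open>f : a \<rightarrow> b is fully cofaithful in A^[1]_c: for every object x of A^[1]_c,
  the functor - \<circ> f : Hom(b,x) \<rightarrow> Hom(a,x) (on 2-arrows: alpha \<mapsto> alpha f0)
  is full and faithful.\<close>
definition fully_cofaithful_c :: "('o,'m) cat \<Rightarrow> 'm \<Rightarrow> 'm \<Rightarrow> 'm \<times> 'm \<Rightarrow> bool" where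
  "fully_cofaithful_c C a b f \<longleftrightarrow>
     (\<forall>x. obj_c C x \<longrightarrow>
        (\<forall>u v. mor1 C b x u \<longrightarrow> mor1 C b x v \<longrightarrow>
           \<comment> \<open>full\<close>
           (\<forall>\<beta>. arr2 C a x (comp1 C u f) (comp1 C v f) \<beta> \<longrightarrow>
              (\<exists>\<alpha>. arr2 C b x u v \<alpha> \<and> cmp C \<alpha> (fst f) = \<beta>)) \<and>
           \<comment> \<open>faithful\<close>
           (\<forall>\<alpha> \<alpha>'. arr2 C b x u v \<alpha> \<longrightarrow> arr2 C b x u v \<alpha>' \<longrightarrow>
              cmp C \<alpha> (fst f) = cmp C \<alpha>' (fst f) \<longrightarrow> \<alpha> = \<alpha>')))"

end

theory Submission
  imports Defs
begin

locale abcat =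
  fixes C :: "('o,'m) cat"
  assumes ab: "abelian C"
begin

lemma pre: "preadditive C" using ab unfolding abelian_def by blast
lemma cat: "category C" using pre unfolding preadditive_def by blast

lemma homI: "f \<in> Ar C \<Longrightarrow> dom C f = A \<Longrightarrow> cod C f = B \<Longrightarrow> f \<in> hom C A B"
  by (simp add: hom_def)
lemma homD:
  assumes "f \<in> hom C A B"
  shows "f \<in> Ar C" "dom C f = A" "cod C f = B" "A \<in> Ob C" "B \<in> Ob C"
proof -
  have c1: "\<forall>f\<in>Ar C. dom C f \<in> Ob C \<and> cod C f \<in> Ob C"
    using cat unfolding category_def by (rule conjunct1)
  show "f \<in> Ar C" "dom C f = A" "cod C f = B" using assms by (auto simp: hom_def)
  thus "A \<in> Ob C" "B \<in> Ob C" using c1 by auto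
qed
lemma ArD: "f \<in> Ar C \<Longrightarrow> f \<in> hom C (dom C f) (cod C f)"
  by (simp add: hom_def)

lemmas cat_p1 = cat[unfolded category_def, THEN conjunct2, THEN conjunct1]
lemmas cat_p2 = cat[unfolded category_def, THEN conjunct2, THEN conjunct2, THEN conjunct1]
lemmas cat_p3 = cat[unfolded category_def, THEN conjunct2, THEN conjunct2, THEN conjunct2, THEN conjunct1]
lemmas cat_p4 = cat[unfolded category_def, THEN conjunct2, THEN conjunct2, THEN conjunct2, THEN conjunct2]
lemmas cat_parts = cat_p1 cat_p2 cat_p3 cat_p4

lemma comp: "f \<in> hom C A B \<Longrightarrow> g \<in> hom C B D \<Longrightarrow> cmp C g f \<in> hom C A D"
  using cat_parts(2) by blast
lemma assoc: "f \<in> hom C A B \<Longrightarrow> g \<in> hom C B D \<Longrightarrow> h \<in> hom C D E \<Longrightarrow>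
    cmp C h (cmp C g f) = cmp C (cmp C h g) f"
  using cat_parts(3) by blast
lemma id_hom [intro]: "A \<in> Ob C \<Longrightarrow> idm C A \<in> hom C A A"
  using cat_parts(1) by blast
lemma idr: "f \<in> hom C A B \<Longrightarrow> cmp C f (idm C A) = f"
  using cat_parts(4) by blast
lemma idl: "f \<in> hom C A B \<Longrightarrow> cmp C (idm C B) f = f"
  using cat_parts(4) by blast

lemmas pre_p1 = pre[unfolded preadditive_def, THEN conjunct2, THEN conjunct1]
lemmas pre_p2 = pre[unfolded preadditive_def, THEN conjunct2, THEN conjunct2, THEN conjunct1]
lemmas pre_p3 = pre[unfolded preadditive_def, THEN conjunct2, THEN conjunct2, THEN conjunct2]
lemmas pre_parts = pre_p1 pre_p2 pre_p3
lemmas preAB0 = pre_p1[rule_format]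
lemmas preAB1 = preAB0[THEN conjunct1]
lemmas preAB2 = preAB0[THEN conjunct2, THEN conjunct1, rule_format]
lemmas preAB3 = preAB0[THEN conjunct2, THEN conjunct2, THEN conjunct1, rule_format]
lemmas preAB4 = preAB0[THEN conjunct2, THEN conjunct2, THEN conjunct2, rule_format]
lemmas preAB = preAB1 preAB2 preAB3 preAB4

lemma zer_hom [intro]: "A \<in> Ob C \<Longrightarrow> B \<in> Ob C \<Longrightarrow> zer C A B \<in> hom C A B"
  by (rule preAB1)
lemma add_hom [intro]: assumes "f \<in> hom C A B" "g \<in> hom C A B" shows "add C f g \<in> hom C A B"
  using preAB2[OF homD(4,5)[OF assms(1)] assms] by blast
lemma add_comm: assumes "f \<in> hom C A B" "g \<in> hom C A B" shows "add C f g = add C g f"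
  using preAB2[OF homD(4,5)[OF assms(1)] assms] by blast
lemma add_assoc: assumes "f \<in> hom C A B" "g \<in> hom C A B" "h \<in> hom C A B" shows
   "add C (add C f g) h = add C f (add C g h)"
  using preAB3[OF homD(4,5)[OF assms(1)] assms] by blast
lemma add_zer: assumes "f \<in> hom C A B" shows "add C f (zer C A B) = f"
  using preAB4[OF homD(4,5)[OF assms(1)] assms] by blast
lemma neg_hom [intro]: assumes "f \<in> hom C A B" shows "neg C f \<in> hom C A B"
  using preAB4[OF homD(4,5)[OF assms(1)] assms] by blast
lemma add_neg: assumes "f \<in> hom C A B" shows "add C f (neg C f) = zer C A B"
  using preAB4[OF homD(4,5)[OF assms(1)] assms] by blast
lemma cmp_add_r: "f \<in> hom C A B \<Longrightarrow> f' \<in> hom C A B \<Longrightarrow> g \<in> hom C B D \<Longrightarrow>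
         cmp C g (add C f f') = add C (cmp C g f) (cmp C g f')"
  using pre_parts(2) by blast
lemma cmp_add_l: "f \<in> hom C A B \<Longrightarrow> g \<in> hom C B D \<Longrightarrow> g' \<in> hom C B D \<Longrightarrow>
         cmp C (add C g g') f = add C (cmp C g f) (cmp C g' f)"
  using pre_parts(3) by blast

lemma sub_hom [intro]: "f \<in> hom C A B \<Longrightarrow> g \<in> hom C A B \<Longrightarrow> sub C f g \<in> hom C A B"
  unfolding sub_def by blast

lemma zer_add: assumes "f \<in> hom C A B" shows "add C (zer C A B) f = f"
proof -
  have z: "zer C A B \<in> hom C A B" using homD(4,5)[OF assms] by blast
  show ?thesis using add_comm[OF z assms] add_zer[OF assms] by simp
qed

lemma neg_add: assumes "f \<in> hom C A B" shows "add C (neg C f) f = zer C A B"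
  using add_comm[OF neg_hom[OF assms] assms] add_neg[OF assms] by simp

lemma add_cancel: assumes f: "f \<in> hom C A B" and g: "g \<in> hom C A B" and h: "h \<in> hom C A B"
  and e: "add C f g = add C f h" shows "g = h"
proof -
  have nf: "neg C f \<in> hom C A B" using f by blast
  have "g = add C (add C (neg C f) f) g"
    using neg_add[OF f] zer_add[OF g] by simp
  also have "\<dots> = add C (neg C f) (add C f g)" using add_assoc[OF nf f g] .
  also have "\<dots> = add C (neg C f) (add C f h)" using e by simp
  also have "\<dots> = add C (add C (neg C f) f) h" using add_assoc[OF nf f h] by simp
  also have "\<dots> = h" using neg_add[OF f] zer_add[OF h] by simp
  finally show ?thesis .
qed

lemma neg_unique: assumes "f \<in> hom C A B" "g \<in> hom C A B" "add C f g = zer C A B"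
  shows "g = neg C f"
  using add_cancel[OF assms(1) assms(2) neg_hom[OF assms(1)]] assms add_neg by simp

lemma sub_zer_iff: assumes f: "f \<in> hom C A B" and g: "g \<in> hom C A B"
  shows "sub C f g = zer C A B \<longleftrightarrow> f = g"
proof
  assume "sub C f g = zer C A B"
  hence "add C f (neg C g) = add C g (neg C g)" using add_neg[OF g] by (simp add: sub_def)
  hence "add C (neg C g) f = add C (neg C g) g"
    using add_comm[OF f neg_hom[OF g]] add_comm[OF g neg_hom[OF g]] by simp
  thus "f = g" using add_cancel[OF neg_hom[OF g] f g] by blast
qed (use add_neg[OF g] in \<open>simp add: sub_def\<close>)

lemma sub_self: "f \<in> hom C A B \<Longrightarrow> sub C f f = zer C A B"
  using sub_zer_iff by blast

lemma neg_zer: assumes "A \<in> Ob C" "B \<in> Ob C" shows "neg C (zer C A B) = zer C A B"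
proof -
  have z: "zer C A B \<in> hom C A B" using assms by blast
  show ?thesis using neg_unique[OF z z add_zer[OF z]] by simp
qed

lemma sub_zer: "f \<in> hom C A B \<Longrightarrow> sub C f (zer C A B) = f"
  by (simp add: sub_def neg_zer homD add_zer)

lemma zer_sub: "f \<in> hom C A B \<Longrightarrow> sub C (zer C A B) f = neg C f"
  by (simp add: sub_def zer_add neg_hom)

lemma neg_neg: assumes "f \<in> hom C A B" shows "neg C (neg C f) = f"
  using neg_unique[OF neg_hom[OF assms] assms neg_add[OF assms]] by simp

lemma add_sub_cancel: assumes f: "f \<in> hom C A B" and g: "g \<in> hom C A B"
  shows "add C f (sub C g f) = g"
proof -
  have "add C f (sub C g f) = add C f (add C (neg C f) g)"
    unfolding sub_def using add_comm[OF g neg_hom[OF f]] by simp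
  also have "\<dots> = add C (add C f (neg C f)) g" using add_assoc[OF f neg_hom[OF f] g] by simp
  also have "\<dots> = g" using add_neg[OF f] zer_add[OF g] by simp
  finally show ?thesis .
qed

lemma sub_add_cancel: assumes f: "f \<in> hom C A B" and g: "g \<in> hom C A B"
  shows "sub C (add C f g) g = f"
  unfolding sub_def using add_assoc[OF f g neg_hom[OF g]] add_neg[OF g] add_zer[OF f] by simp

lemma cmp_zer_r: assumes "g \<in> hom C B D" "A \<in> Ob C"
  shows "cmp C g (zer C A B) = zer C A D"
proof -
  have B: "B \<in> Ob C" "D \<in> Ob C" using assms homD by auto
  have z: "zer C A B \<in> hom C A B" using B assms by blast
  have h: "cmp C g (zer C A B) \<in> hom C A D" using comp[OF z assms(1)] .
  have "add C (cmp C g (zer C A B)) (cmp C g (zer C A B)) = cmp C g (zer C A B)"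
    using cmp_add_r[OF z z assms(1)] add_zer[OF z] by simp
  also have "\<dots> = add C (cmp C g (zer C A B)) (zer C A D)" using add_zer h by simp
  finally show ?thesis using add_cancel h assms B by blast
qed

lemma cmp_zer_l: assumes "f \<in> hom C A B" "D \<in> Ob C"
  shows "cmp C (zer C B D) f = zer C A D"
proof -
  have B: "B \<in> Ob C" "A \<in> Ob C" using assms homD by auto
  have z: "zer C B D \<in> hom C B D" using B assms by blast
  have h: "cmp C (zer C B D) f \<in> hom C A D" using comp[OF assms(1) z] .
  have "add C (cmp C (zer C B D) f) (cmp C (zer C B D) f) = cmp C (zer C B D) f"
    using cmp_add_l[OF assms(1) z z] add_zer[OF z] by simp
  also have "\<dots> = add C (cmp C (zer C B D) f) (zer C A D)" using add_zer h by simp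
  finally show ?thesis using add_cancel h assms B by blast
qed

lemma cmp_neg_r: assumes f: "f \<in> hom C A B" and g: "g \<in> hom C B D"
  shows "cmp C g (neg C f) = neg C (cmp C g f)"
proof (rule neg_unique[of _ A D])
  show "cmp C g f \<in> hom C A D" "cmp C g (neg C f) \<in> hom C A D" using comp[OF f g] comp[OF neg_hom[OF f] g] by blast+
  have "add C (cmp C g f) (cmp C g (neg C f)) = cmp C g (add C f (neg C f))"
    using cmp_add_r[OF f neg_hom[OF f] g] by simp
  also have "\<dots> = zer C A D" using add_neg[OF f] cmp_zer_r[OF g homD(4)[OF f]] by simp
  finally show "add C (cmp C g f) (cmp C g (neg C f)) = zer C A D" .
qed

lemma cmp_neg_l: assumes f: "f \<in> hom C A B" and g: "g \<in> hom C B D"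
  shows "cmp C (neg C g) f = neg C (cmp C g f)"
proof (rule neg_unique[of _ A D])
  show "cmp C g f \<in> hom C A D" "cmp C (neg C g) f \<in> hom C A D" using comp[OF f g] comp[OF f neg_hom[OF g]] by blast+
  have "add C (cmp C g f) (cmp C (neg C g) f) = cmp C (add C g (neg C g)) f"
    using cmp_add_l[OF f g neg_hom[OF g]] by simp
  also have "\<dots> = zer C A D" using add_neg[OF g] cmp_zer_l[OF f homD(5)[OF g]] by simp
  finally show "add C (cmp C g f) (cmp C (neg C g) f) = zer C A D" .
qed

lemma cmp_sub_r: "f \<in> hom C A B \<Longrightarrow> f' \<in> hom C A B \<Longrightarrow> g \<in> hom C B D \<Longrightarrow>
         cmp C g (sub C f f') = sub C (cmp C g f) (cmp C g f')"
  unfolding sub_def by (simp add: cmp_add_r cmp_neg_r neg_hom)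

lemma cmp_sub_l: "f \<in> hom C A B \<Longrightarrow> g \<in> hom C B D \<Longrightarrow> g' \<in> hom C B D \<Longrightarrow>
         cmp C (sub C g g') f = sub C (cmp C g f) (cmp C g' f)"
  unfolding sub_def by (simp add: cmp_add_l cmp_neg_l neg_hom)

lemma neg_inj: "f \<in> hom C A B \<Longrightarrow> g \<in> hom C A B \<Longrightarrow> neg C f = neg C g \<Longrightarrow> f = g"
  by (metis neg_neg)

end

context abcat
begin

lemma ex1_uniq: "\<exists>!x. P x \<Longrightarrow> P a \<Longrightarrow> P b \<Longrightarrow> a = b" by blast

lemma epi_cancel: "epi C e \<Longrightarrow> u \<in> hom C (cod C e) X \<Longrightarrow> v \<in> hom C (cod C e) X \<Longrightarrow>
   cmp C u e = cmp C v e \<Longrightarrow> u = v"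
  unfolding epi_def by blast
lemma mono_cancel: "mono C m \<Longrightarrow> u \<in> hom C X (dom C m) \<Longrightarrow> v \<in> hom C X (dom C m) \<Longrightarrow>
   cmp C m u = cmp C m v \<Longrightarrow> u = v"
  unfolding mono_def by blast

lemma epi_zeroI: assumes e: "e \<in> hom C A B"
  and H: "\<And>Y u. u \<in> hom C B Y \<Longrightarrow> cmp C u e = zer C A Y \<Longrightarrow> u = zer C B Y"
  shows "epi C e"
  unfolding epi_def
proof (intro conjI allI impI)
  show "e \<in> Ar C" using homD[OF e] by simp
  fix X u v assume u: "u \<in> hom C (cod C e) X" and v: "v \<in> hom C (cod C e) X"
    and eq: "cmp C u e = cmp C v e"
  have cB: "cod C e = B" using homD[OF e] by simp
  have u': "u \<in> hom C B X" and v': "v \<in> hom C B X" using u v cB by auto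
  have "cmp C (sub C u v) e = sub C (cmp C u e) (cmp C v e)" using cmp_sub_l[OF e u' v'] .
  also have "\<dots> = zer C A X" using eq sub_self[OF comp[OF e v']] by simp
  finally have "sub C u v = zer C B X" using H[of "sub C u v" X] u' v' by blast
  thus "u = v" using sub_zer_iff[OF u' v'] by simp
qed

lemma mono_zeroI: assumes m: "m \<in> hom C A B"
  and H: "\<And>Y y. y \<in> hom C Y A \<Longrightarrow> cmp C m y = zer C Y B \<Longrightarrow> y = zer C Y A"
  shows "mono C m"
  unfolding mono_def
proof (intro conjI allI impI)
  show "m \<in> Ar C" using homD[OF m] by simp
  fix X u v assume u: "u \<in> hom C X (dom C m)" and v: "v \<in> hom C X (dom C m)"
    and eq: "cmp C m u = cmp C m v"
  have cB: "dom C m = A" using homD[OF m] by simp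
  have u': "u \<in> hom C X A" and v': "v \<in> hom C X A" using u v cB by auto
  have "cmp C m (sub C u v) = sub C (cmp C m u) (cmp C m v)" using cmp_sub_r[OF u' v' m] .
  also have "\<dots> = zer C X B" using eq sub_self[OF comp[OF v' m]] by simp
  finally have "sub C u v = zer C X A" using H[of "sub C u v" X] u' v' by blast
  thus "u = v" using sub_zer_iff[OF u' v'] by simp
qed

lemma epi_zero: assumes "epi C e" "e \<in> hom C A B" "u \<in> hom C B Y" "cmp C u e = zer C A Y"
  shows "u = zer C B Y"
proof -
  have z: "zer C B Y \<in> hom C B Y" using homD[OF assms(3)] by blast
  have "cmp C (zer C B Y) e = zer C A Y" using cmp_zer_l[OF assms(2) homD(5)[OF assms(3)]] .
  thus ?thesis using epi_cancel[OF assms(1), of u Y "zer C B Y"] assms z homD(3)[OF assms(2)] by simp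
qed

lemma mono_zero: assumes "mono C m" "m \<in> hom C A B" "y \<in> hom C Y A" "cmp C m y = zer C Y B"
  shows "y = zer C Y A"
proof -
  have z: "zer C Y A \<in> hom C Y A" using homD[OF assms(3)] by blast
  have "cmp C m (zer C Y A) = zer C Y B" using cmp_zer_r[OF assms(2) homD(4)[OF assms(3)]] .
  thus ?thesis using mono_cancel[OF assms(1), of y Y "zer C Y A"] assms z homD(2)[OF assms(2)] by simp
qed

subsection \<open>Kernels and cokernels\<close>

lemma is_kernelD: assumes "is_kernel C f k"
  shows "f \<in> Ar C" "k \<in> Ar C" "cod C k = dom C f" "cmp C f k = zer C (dom C k) (cod C f)"
   "\<And>t. t \<in> Ar C \<Longrightarrow> cod C t = dom C f \<Longrightarrow> cmp C f t = zer C (dom C t) (cod C f) \<Longrightarrow>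
        (\<exists>!u. u \<in> hom C (dom C t) (dom C k) \<and> cmp C k u = t)"
  using assms unfolding is_kernel_def by blast+

lemma ker_hom: assumes "is_kernel C f k" "f \<in> hom C A B" shows "k \<in> hom C (dom C k) A"
  using is_kernelD(2,3)[OF assms(1)] homD(2)[OF assms(2)] by (simp add: hom_def)
lemma ker_zero: assumes "is_kernel C f k" "f \<in> hom C A B" shows "cmp C f k = zer C (dom C k) B"
  using is_kernelD(4)[OF assms(1)] homD(3)[OF assms(2)] by simp
lemma ker_factor: assumes "is_kernel C f k" "f \<in> hom C A B" "t \<in> hom C T A"
  "cmp C f t = zer C T B" shows "\<exists>u\<in>hom C T (dom C k). cmp C k u = t"
proof -
  have "t \<in> Ar C" "cod C t = dom C f" "dom C t = T" "cod C f = B"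
    using homD[OF assms(3)] homD[OF assms(2)] by auto
  moreover have "cmp C f t = zer C (dom C t) (cod C f)" using assms(4) calculation by simp
  ultimately have "\<exists>!u. u \<in> hom C (dom C t) (dom C k) \<and> cmp C k u = t"
    using is_kernelD(5)[OF assms(1)] by blast
  thus ?thesis using \<open>dom C t = T\<close> by auto
qed
lemma ker_mono: assumes k: "is_kernel C f k" shows "mono C k"
  unfolding mono_def
proof (intro conjI allI impI)
  show "k \<in> Ar C" using is_kernelD(2)[OF k] .
  have f: "f \<in> hom C (dom C f) (cod C f)" using ArD[OF is_kernelD(1)[OF k]] .
  have kh: "k \<in> hom C (dom C k) (dom C f)" using ker_hom[OF k f] .
  fix X u v assume u: "u \<in> hom C X (dom C k)" and v: "v \<in> hom C X (dom C k)"
    and eq: "cmp C k u = cmp C k v"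
  define t where "t = cmp C k u"
  have t: "t \<in> hom C X (dom C f)" using comp[OF u kh] unfolding t_def .
  have "cmp C f t = cmp C (cmp C f k) u" unfolding t_def using assoc[OF u kh f] .
  also have "\<dots> = zer C X (cod C f)"
    using ker_zero[OF k f] cmp_zer_l[OF u homD(5)[OF f]] by simp
  finally have ft: "cmp C f t = zer C (dom C t) (cod C f)" using homD(2)[OF t] by simp
  have ex: "\<exists>!w. w \<in> hom C (dom C t) (dom C k) \<and> cmp C k w = t"
    using is_kernelD(5)[OF k homD(1)[OF t] homD(3)[OF t] ft] .
  have P1: "u \<in> hom C (dom C t) (dom C k) \<and> cmp C k u = t" using u homD(2)[OF t] t_def by simp
  have P2: "v \<in> hom C (dom C t) (dom C k) \<and> cmp C k v = t" using v eq homD(2)[OF t] t_def by simp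
  show "u = v" by (rule ex1_uniq[OF ex P1 P2])
qed

lemma is_cokernelD: assumes "is_cokernel C f c"
  shows "f \<in> Ar C" "c \<in> Ar C" "dom C c = cod C f" "cmp C c f = zer C (dom C f) (cod C c)"
   "\<And>t. t \<in> Ar C \<Longrightarrow> dom C t = cod C f \<Longrightarrow> cmp C t f = zer C (dom C f) (cod C t) \<Longrightarrow>
        (\<exists>!u. u \<in> hom C (cod C c) (cod C t) \<and> cmp C u c = t)"
  using assms unfolding is_cokernel_def by blast+

lemma cok_hom: assumes "is_cokernel C f c" "f \<in> hom C A B" shows "c \<in> hom C B (cod C c)"
  using is_cokernelD(2,3)[OF assms(1)] homD(3)[OF assms(2)] by (simp add: hom_def)
lemma cok_zero: assumes "is_cokernel C f c" "f \<in> hom C A B" shows "cmp C c f = zer C A (cod C c)"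
  using is_cokernelD(4)[OF assms(1)] homD(2)[OF assms(2)] by simp
lemma cok_factor: assumes "is_cokernel C f c" "f \<in> hom C A B" "t \<in> hom C B T"
  "cmp C t f = zer C A T" shows "\<exists>u\<in>hom C (cod C c) T. cmp C u c = t"
proof -
  have "t \<in> Ar C" "dom C t = cod C f" "cod C t = T" "dom C f = A"
    using homD[OF assms(3)] homD[OF assms(2)] by auto
  moreover have "cmp C t f = zer C (dom C f) (cod C t)" using assms(4) calculation by simp
  ultimately have "\<exists>!u. u \<in> hom C (cod C c) (cod C t) \<and> cmp C u c = t"
    using is_cokernelD(5)[OF assms(1)] by blast
  thus ?thesis using \<open>cod C t = T\<close> by auto
qed
lemma cok_epi: assumes k: "is_cokernel C f k" shows "epi C k"
  unfolding epi_def
proof (intro conjI allI impI)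
  show "k \<in> Ar C" using is_cokernelD(2)[OF k] .
  have f: "f \<in> hom C (dom C f) (cod C f)" using ArD[OF is_cokernelD(1)[OF k]] .
  have kh: "k \<in> hom C (cod C f) (cod C k)" using cok_hom[OF k f] .
  fix X u v assume u: "u \<in> hom C (cod C k) X" and v: "v \<in> hom C (cod C k) X"
    and eq: "cmp C u k = cmp C v k"
  define t where "t = cmp C u k"
  have t: "t \<in> hom C (cod C f) X" using comp[OF kh u] unfolding t_def .
  have "cmp C t f = cmp C u (cmp C k f)" unfolding t_def using assoc[OF f kh u] by simp
  also have "\<dots> = zer C (dom C f) X"
    using cok_zero[OF k f] cmp_zer_r[OF u homD(4)[OF f]] by simp
  finally have ft: "cmp C t f = zer C (dom C f) (cod C t)" using homD(3)[OF t] by simp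
  have ex: "\<exists>!w. w \<in> hom C (cod C k) (cod C t) \<and> cmp C w k = t"
    using is_cokernelD(5)[OF k homD(1)[OF t] homD(2)[OF t] ft] .
  have P1: "u \<in> hom C (cod C k) (cod C t) \<and> cmp C u k = t" using u homD(3)[OF t] t_def by simp
  have P2: "v \<in> hom C (cod C k) (cod C t) \<and> cmp C v k = t" using v eq homD(3)[OF t] t_def by simp
  show "u = v" by (rule ex1_uniq[OF ex P1 P2])
qed

lemmas ab_zero = ab[unfolded abelian_def, THEN conjunct2, THEN conjunct1]
lemmas ab_prod = ab[unfolded abelian_def, THEN conjunct2, THEN conjunct2, THEN conjunct1]
lemmas ab_ker = ab[unfolded abelian_def, THEN conjunct2, THEN conjunct2, THEN conjunct2, THEN conjunct1]
lemmas ab_cok = ab[unfolded abelian_def, THEN conjunct2, THEN conjunct2, THEN conjunct2, THEN conjunct2, THEN conjunct1]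
lemmas ab_monoker = ab[unfolded abelian_def, THEN conjunct2, THEN conjunct2, THEN conjunct2, THEN conjunct2, THEN conjunct2, THEN conjunct1]

lemma has_ker: "f \<in> Ar C \<Longrightarrow> \<exists>k. is_kernel C f k" using ab_ker by blast
lemma has_cok: "f \<in> Ar C \<Longrightarrow> \<exists>k. is_cokernel C f k" using ab_cok by blast
lemma mono_is_ker: "mono C m \<Longrightarrow> \<exists>f. is_kernel C f m" using ab_monoker by blast

lemma zero_obj: obtains Z where "Z \<in> Ob C" "projective C Z"
proof -
  obtain Z where Z: "Z \<in> Ob C" and H: "\<forall>A\<in>Ob C. hom C Z A = {zer C Z A} \<and> hom C A Z = {zer C A Z}"
    using ab_zero by blast
  have "projective C Z"
    unfolding projective_def
  proof (intro conjI allI impI)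
    show "Z \<in> Ob C" by fact
    fix e f assume e: "epi C e" and f: "f \<in> hom C Z (cod C e)"
    have eh: "e \<in> hom C (dom C e) (cod C e)" using e ArD unfolding epi_def by blast
    have g: "zer C Z (dom C e) \<in> hom C Z (dom C e)" using Z homD(4)[OF eh] by blast
    have "cmp C e (zer C Z (dom C e)) \<in> hom C Z (cod C e)" using comp[OF g eh] .
    moreover have "hom C Z (cod C e) = {zer C Z (cod C e)}" using H homD(5)[OF eh] by blast
    ultimately have "cmp C e (zer C Z (dom C e)) = f" using f by simp
    thus "\<exists>g\<in>hom C Z (dom C e). cmp C e g = f" using g by blast
  qed
  thus ?thesis using that Z by blast
qed

lemma ex1_ex_bex: "\<exists>!u. u \<in> S \<and> P u \<Longrightarrow> \<exists>u\<in>S. P u" by blast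

lemma biprod: assumes A: "A \<in> Ob C" and B: "B \<in> Ob C"
  obtains P p1 p2 i1 i2 where "p1 \<in> hom C P A" "p2 \<in> hom C P B" "i1 \<in> hom C A P" "i2 \<in> hom C B P"
    "cmp C p1 i1 = idm C A" "cmp C p2 i1 = zer C A B" "cmp C p1 i2 = zer C B A" "cmp C p2 i2 = idm C B"
    "\<And>X f g. f \<in> hom C X A \<Longrightarrow> g \<in> hom C X B \<Longrightarrow> \<exists>u\<in>hom C X P. cmp C p1 u = f \<and> cmp C p2 u = g"
    "\<And>X u v. u \<in> hom C X P \<Longrightarrow> v \<in> hom C X P \<Longrightarrow> cmp C p1 u = cmp C p1 v \<Longrightarrow>
        cmp C p2 u = cmp C p2 v \<Longrightarrow> u = v"
proof -
  have "\<exists>P p1 p2. p1 \<in> hom C P A \<and> p2 \<in> hom C P B \<and>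
        (\<forall>X f g. f \<in> hom C X A \<longrightarrow> g \<in> hom C X B \<longrightarrow>
           (\<exists>!u. u \<in> hom C X P \<and> cmp C p1 u = f \<and> cmp C p2 u = g))"
    using ab_prod[rule_format, OF A B] .
  then obtain P p1 p2 where p1: "p1 \<in> hom C P A" and p2: "p2 \<in> hom C P B" and
    U0: "\<forall>X f g. f \<in> hom C X A \<longrightarrow> g \<in> hom C X B \<longrightarrow>
           (\<exists>!u. u \<in> hom C X P \<and> cmp C p1 u = f \<and> cmp C p2 u = g)"
    by (elim exE conjE)
  have U: "\<And>X f g. f \<in> hom C X A \<Longrightarrow> g \<in> hom C X B \<Longrightarrow>
           (\<exists>!u. u \<in> hom C X P \<and> cmp C p1 u = f \<and> cmp C p2 u = g)"
    using U0 by (elim allE impE)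
  have ex: "\<And>X f g. f \<in> hom C X A \<Longrightarrow> g \<in> hom C X B \<Longrightarrow> \<exists>u\<in>hom C X P. cmp C p1 u = f \<and> cmp C p2 u = g"
    by (rule ex1_ex_bex, rule U)
  have un: "\<And>X u v. u \<in> hom C X P \<Longrightarrow> v \<in> hom C X P \<Longrightarrow> cmp C p1 u = cmp C p1 v \<Longrightarrow>
        cmp C p2 u = cmp C p2 v \<Longrightarrow> u = v"
  proof -
    fix X u v assume u: "u \<in> hom C X P" and v: "v \<in> hom C X P" and e1: "cmp C p1 u = cmp C p1 v"
      and e2: "cmp C p2 u = cmp C p2 v"
    have "cmp C p1 u \<in> hom C X A" "cmp C p2 u \<in> hom C X B" using comp[OF u p1] comp[OF u p2] by blast+
    note E = U[OF this]
    have P1: "u \<in> hom C X P \<and> cmp C p1 u = cmp C p1 u \<and> cmp C p2 u = cmp C p2 u" using u by simp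
    have P2: "v \<in> hom C X P \<and> cmp C p1 v = cmp C p1 u \<and> cmp C p2 v = cmp C p2 u" using v e1 e2 by simp
    show "u = v" by (rule ex1_uniq[OF E P1 P2])
  qed
  obtain i1 where i1: "i1 \<in> hom C A P" "cmp C p1 i1 = idm C A" "cmp C p2 i1 = zer C A B"
    using ex[OF id_hom[OF A] zer_hom[OF A B]] by (elim bexE conjE)
  obtain i2 where i2: "i2 \<in> hom C B P" "cmp C p1 i2 = zer C B A" "cmp C p2 i2 = idm C B"
    using ex[OF zer_hom[OF B A] id_hom[OF B]] by (elim bexE conjE)
  show ?thesis by (rule that[OF p1 p2 i1(1) i2(1) i1(2,3) i2(2,3) ex un])
qed

subsection \<open>Image lemma\<close>

lemma mono_comp: assumes "mono C m" "m \<in> hom C I A" "mono C k" "k \<in> hom C K I"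
  shows "mono C (cmp C m k)"
  unfolding mono_def
proof (intro conjI allI impI)
  have mk: "cmp C m k \<in> hom C K A" using comp[OF assms(4,2)] .
  thus "cmp C m k \<in> Ar C" using homD by blast
  fix X u v assume u: "u \<in> hom C X (dom C (cmp C m k))" and v: "v \<in> hom C X (dom C (cmp C m k))"
    and eq: "cmp C (cmp C m k) u = cmp C (cmp C m k) v"
  have u': "u \<in> hom C X K" and v': "v \<in> hom C X K" using u v homD(2)[OF mk] by auto
  have "cmp C m (cmp C k u) = cmp C m (cmp C k v)"
    using eq assoc[OF u' assms(4) assms(2)] assoc[OF v' assms(4) assms(2)] by simp
  moreover have "cmp C k u \<in> hom C X (dom C m)" "cmp C k v \<in> hom C X (dom C m)"
    using comp[OF u' assms(4)] comp[OF v' assms(4)] homD(2)[OF assms(2)] by simp_all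
  ultimately have "cmp C k u = cmp C k v"
    using mono_cancel[OF assms(1)] by blast
  moreover have "u \<in> hom C X (dom C k)" "v \<in> hom C X (dom C k)"
    using u' v' homD(2)[OF assms(4)] by simp_all
  ultimately show "u = v" using mono_cancel[OF assms(3)] by blast
qed

lemma image_epi: assumes a: "a \<in> hom C A1 A0" and c: "is_cokernel C a c" and m: "is_kernel C c m"
  and e: "e \<in> hom C A1 (dom C m)" and me: "cmp C m e = a"
  shows "epi C e"
proof -
  define I where "I = dom C m"
  define Q where "Q = cod C c"
  have ch: "c \<in> hom C A0 Q" using cok_hom[OF c a] unfolding Q_def .
  have mh: "m \<in> hom C I A0" using ker_hom[OF m ch] unfolding I_def .
  have mm: "mono C m" using ker_mono[OF m] .
  have e': "e \<in> hom C A1 I" using e unfolding I_def .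
  show ?thesis
  proof (rule epi_zeroI[OF e'])
    fix Y u assume u: "u \<in> hom C I Y" and ue: "cmp C u e = zer C A1 Y"
    obtain k where k: "is_kernel C u k" using has_ker homD(1)[OF u] by blast
    define K where "K = dom C k"
    have kh: "k \<in> hom C K I" using ker_hom[OF k u] unfolding K_def .
    obtain e' where e'h: "e' \<in> hom C A1 K" and ke': "cmp C k e' = e"
      using ker_factor[OF k u e' ue] unfolding K_def by blast
    have mk: "mono C (cmp C m k)" using mono_comp[OF mm mh ker_mono[OF k] kh] .
    have mkh: "cmp C m k \<in> hom C K A0" using comp[OF kh mh] .
    obtain r where r: "is_kernel C r (cmp C m k)" using mono_is_ker[OF mk] by blast
    have rA: "r \<in> Ar C" and domr: "dom C r = A0" using r homD(3)[OF mkh] unfolding is_kernel_def by auto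
    define R where "R = cod C r"
    have rh: "r \<in> hom C A0 R" using rA domr unfolding R_def by (simp add: hom_def)
    have rmk: "cmp C r (cmp C m k) = zer C K R" using ker_zero[OF r rh] homD(2)[OF mkh] by simp
    have "cmp C r a = cmp C r (cmp C (cmp C m k) e')"
      using me ke' assoc[OF e'h kh mh] by simp
    also have "\<dots> = cmp C (cmp C r (cmp C m k)) e'" using assoc[OF e'h mkh rh] .
    also have "\<dots> = zer C A1 R" using rmk cmp_zer_l[OF e'h homD(5)[OF rh]] by simp
    finally have ra: "cmp C r a = zer C A1 R" .
    obtain r' where r'h: "r' \<in> hom C Q R" and r'c: "cmp C r' c = r"
      using cok_factor[OF c a rh ra] unfolding Q_def by blast
    have cm: "cmp C c m = zer C I Q" using ker_zero[OF m ch] unfolding I_def .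
    have "cmp C r m = cmp C r' (cmp C c m)" using r'c assoc[OF mh ch r'h] by simp
    also have "\<dots> = zer C I R" using cm cmp_zer_r[OF r'h homD(4)[OF mh]] by simp
    finally have rm: "cmp C r m = zer C I R" .
    obtain j where jh: "j \<in> hom C I (dom C (cmp C m k))" and mkj: "cmp C (cmp C m k) j = m"
      using ker_factor[OF r rh mh rm] by blast
    have jh': "j \<in> hom C I K" using jh homD(2)[OF mkh] by simp
    have "cmp C m (cmp C k j) = cmp C m (idm C I)"
      using mkj assoc[OF jh' kh mh] idr[OF mh] by simp
    moreover have "cmp C k j \<in> hom C I (dom C m)" "idm C I \<in> hom C I (dom C m)"
      using comp[OF jh' kh] id_hom[OF homD(4)[OF mh]] homD(2)[OF mh] by simp_all
    ultimately have kj: "cmp C k j = idm C I"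
      using mono_cancel[OF mm] by blast
    have uk: "cmp C u k = zer C K Y" using ker_zero[OF k u] unfolding K_def .
    have "u = cmp C u (cmp C k j)" using kj idr[OF u] by simp
    also have "\<dots> = cmp C (cmp C u k) j" using assoc[OF jh' kh u] .
    also have "\<dots> = zer C I Y" using uk cmp_zer_l[OF jh' homD(5)[OF u]] by simp
    finally show "u = zer C I Y" .
  qed
qed

lemma proj_lift: assumes P: "projective C P" and e: "epi C e" and eh: "e \<in> hom C A B"
  and f: "f \<in> hom C P B" shows "\<exists>g\<in>hom C P A. cmp C e g = f"
proof -
  have H: "\<forall>e f. epi C e \<longrightarrow> f \<in> hom C P (cod C e) \<longrightarrow> (\<exists>g \<in> hom C P (dom C e). cmp C e g = f)"
    using P unfolding projective_def by (rule conjunct2)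
  have "f \<in> hom C P (cod C e)" using f homD(3)[OF eh] by simp
  from H[rule_format, OF e this] show ?thesis using homD(2)[OF eh] by simp
qed

lemma lift_cok: assumes a: "a \<in> hom C A1 A0" and c: "is_cokernel C a c" and P: "projective C P"
  and z: "z \<in> hom C P A0" and cz: "cmp C c z = zer C P (cod C c)"
  shows "\<exists>t\<in>hom C P A1. cmp C a t = z"
proof -
  define Q where "Q = cod C c"
  have ch: "c \<in> hom C A0 Q" using cok_hom[OF c a] unfolding Q_def .
  obtain m where m: "is_kernel C c m" using has_ker homD(1)[OF ch] by blast
  define I where "I = dom C m"
  have mh: "m \<in> hom C I A0" using ker_hom[OF m ch] unfolding I_def .
  have ca: "cmp C c a = zer C A1 Q" using cok_zero[OF c a] unfolding Q_def .
  obtain e where eh: "e \<in> hom C A1 I" and me: "cmp C m e = a"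
    using ker_factor[OF m ch a ca] unfolding I_def by blast
  have ee: "epi C e" using image_epi[OF a c m] eh me unfolding I_def by blast
  obtain u where uh: "u \<in> hom C P I" and mu: "cmp C m u = z"
    using ker_factor[OF m ch z] cz unfolding I_def Q_def by blast
  obtain t where th: "t \<in> hom C P (dom C e)" and et: "cmp C e t = u"
    using proj_lift[OF P ee eh uh] homD(2)[OF eh] by auto
  have th': "t \<in> hom C P A1" using th homD(2)[OF eh] by simp
  have "cmp C a t = z" using me mu et assoc[OF th' eh mh] by simp
  thus ?thesis using th' by blast
qed

end

context abcat
begin

lemma mor1_comp: assumes f: "mor1 C a b f" and u: "mor1 C b x u"
  shows "mor1 C a x (comp1 C u f)"
proof -
  have a: "a \<in> hom C (dom C a) (cod C a)" and b: "b \<in> hom C (dom C b) (cod C b)"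
   and x: "x \<in> hom C (dom C x) (cod C x)"
    using f u ArD unfolding mor1_def by blast+
  have f0: "fst f \<in> hom C (cod C a) (cod C b)" and f1: "snd f \<in> hom C (dom C a) (dom C b)"
    and fc: "cmp C b (snd f) = cmp C (fst f) a" using f unfolding mor1_def by blast+
  have u0: "fst u \<in> hom C (cod C b) (cod C x)" and u1: "snd u \<in> hom C (dom C b) (dom C x)"
    and uc: "cmp C x (snd u) = cmp C (fst u) b" using u unfolding mor1_def by blast+
  have "cmp C x (cmp C (snd u) (snd f)) = cmp C (cmp C x (snd u)) (snd f)" using assoc[OF f1 u1 x] .
  also have "\<dots> = cmp C (fst u) (cmp C b (snd f))" using uc assoc[OF f1 b u0] by simp
  also have "\<dots> = cmp C (cmp C (fst u) (fst f)) a" using fc assoc[OF a f0 u0] by simp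
  finally show ?thesis unfolding mor1_def comp1_def using f u comp[OF f0 u0] comp[OF f1 u1]
    by (simp add: mor1_def)
qed

lemma mor1_zer: assumes b: "b \<in> hom C B1 B0" and x: "x \<in> hom C X1 X0"
  shows "mor1 C b x (zer C B0 X0, zer C B1 X1)"
  unfolding mor1_def using homD[OF b] homD[OF x] cmp_zer_r[OF x homD(4)[OF b]] cmp_zer_l[OF b homD(5)[OF x]]
  by auto

lemma fc_full: assumes "fully_cofaithful_c C a b f" "obj_c C x" "mor1 C b x u" "mor1 C b x v"
  "arr2 C a x (comp1 C u f) (comp1 C v f) \<beta>"
  shows "\<exists>\<alpha>. arr2 C b x u v \<alpha> \<and> cmp C \<alpha> (fst f) = \<beta>"
  using assms unfolding fully_cofaithful_c_def by blast

lemma fc_faith: assumes "fully_cofaithful_c C a b f" "obj_c C x" "mor1 C b x u" "mor1 C b x v"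
  "arr2 C b x u v \<alpha>" "arr2 C b x u v \<alpha>'" "cmp C \<alpha> (fst f) = cmp C \<alpha>' (fst f)"
  shows "\<alpha> = \<alpha>'"
  using assms unfolding fully_cofaithful_c_def by blast

end

context abcat
begin

lemma fwd:
  assumes EP: "enough_projectives C"
    and oa: "obj_c C a" and ob: "obj_c C b" and mf: "mor1 C a b f"
    and kak: "is_kernel C a ka" and kbk: "is_kernel C b kb"
    and gh: "g \<in> hom C (dom C ka) (dom C kb)" and gc: "cmp C kb g = cmp C (snd f) ka"
    and cak: "is_cokernel C a ca" and cbk: "is_cokernel C b cb"
    and hh: "h \<in> hom C (cod C ca) (cod C cb)" and hc: "cmp C h ca = cmp C cb (fst f)"
    and FC: "fully_cofaithful_c C a b f"
  shows "iso C h \<and> epi C g"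
proof -
  define A1 A0 B1 B0 Ka Kb Qa Qb where "A1 = dom C a" and "A0 = cod C a" and "B1 = dom C b"
    and "B0 = cod C b" and "Ka = dom C ka" and "Kb = dom C kb" and "Qa = cod C ca" and "Qb = cod C cb"
  define f0 f1 where "f0 = fst f" and "f1 = snd f"
  have a: "a \<in> hom C A1 A0" using oa ArD unfolding obj_c_def A1_def A0_def by blast
  have b: "b \<in> hom C B1 B0" using ob ArD unfolding obj_c_def B1_def B0_def by blast
  have f0: "f0 \<in> hom C A0 B0" and f1: "f1 \<in> hom C A1 B1" and fc: "cmp C b f1 = cmp C f0 a"
    using mf unfolding mor1_def f0_def f1_def A0_def B0_def A1_def B1_def by blast+
  have ka: "ka \<in> hom C Ka A1" using ker_hom[OF kak a] unfolding Ka_def .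
  have kb: "kb \<in> hom C Kb B1" using ker_hom[OF kbk b] unfolding Kb_def .
  have g: "g \<in> hom C Ka Kb" using gh unfolding Ka_def Kb_def .
  have ca: "ca \<in> hom C A0 Qa" using cok_hom[OF cak a] unfolding Qa_def .
  have cb: "cb \<in> hom C B0 Qb" using cok_hom[OF cbk b] unfolding Qb_def .
  have h: "h \<in> hom C Qa Qb" using hh unfolding Qa_def Qb_def .
  have gc': "cmp C kb g = cmp C f1 ka" using gc unfolding f1_def .
  have hc': "cmp C h ca = cmp C cb f0" using hc unfolding f0_def .
  obtain Z where Z: "Z \<in> Ob C" "projective C Z" using zero_obj by blast
  have A0: "A0 \<in> Ob C" and A1: "A1 \<in> Ob C" and B0: "B0 \<in> Ob C" and B1: "B1 \<in> Ob C"
    and Qa: "Qa \<in> Ob C" and Qb: "Qb \<in> Ob C" and Kb: "Kb \<in> Ob C" and Ka: "Ka \<in> Ob C"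
    using homD[OF a] homD[OF b] homD[OF ca] homD[OF cb] homD[OF kb] homD[OF ka] by auto
  have caepi: "epi C ca" using cok_epi[OF cak] .
  have cbepi: "epi C cb" using cok_epi[OF cbk] .
  obtain \<phi> where \<phi>: "\<phi> \<in> hom C Qb Qa" and \<phi>h: "cmp C \<phi> h = idm C Qa"
  proof -
    define x where "x = zer C Qa Z"
    have x: "x \<in> hom C Qa Z" unfolding x_def using Qa Z by blast
    have ox: "obj_c C x" unfolding obj_c_def using homD[OF x] Z by simp
    define u where "u = (zer C B0 Z, zer C B1 Qa)"
    have mu: "mor1 C b x u" unfolding u_def by (rule mor1_zer[OF b x])
    have cu: "comp1 C u f = (zer C A0 Z, zer C A1 Qa)"
      unfolding comp1_def u_def using cmp_zer_l[OF f0 Z(1)] cmp_zer_l[OF f1 Qa]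
      by (simp add: f0_def f1_def)
    have "arr2 C a x (comp1 C u f) (comp1 C u f) ca"
      unfolding arr2_def
    proof (intro conjI)
      show "mor1 C a x (comp1 C u f)" using mor1_comp[OF mf mu] .
      show "mor1 C a x (comp1 C u f)" using mor1_comp[OF mf mu] .
      show "ca \<in> hom C (cod C a) (dom C x)" using ca homD(2)[OF x] A0_def by simp
      show "sub C (snd (comp1 C u f)) (snd (comp1 C u f)) = cmp C ca a"
        using cu sub_self[OF zer_hom[OF A1 Qa]] cok_zero[OF cak a] Qa_def by simp
      show "sub C (fst (comp1 C u f)) (fst (comp1 C u f)) = cmp C x ca"
        using cu sub_self[OF zer_hom[OF A0 Z(1)]] cmp_zer_l[OF ca Z(1)] x_def by simp
    qed
    then obtain \<alpha> where ar: "arr2 C b x u u \<alpha>" and \<alpha>f: "cmp C \<alpha> f0 = ca"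
      using fc_full[OF FC ox mu mu] unfolding f0_def by blast
    have \<alpha>: "\<alpha> \<in> hom C B0 Qa" using ar homD(2)[OF x] unfolding arr2_def B0_def by simp
    have "cmp C \<alpha> b = sub C (zer C B1 Qa) (zer C B1 Qa)" using ar unfolding arr2_def u_def by simp
    hence \<alpha>b: "cmp C \<alpha> b = zer C B1 Qa" using sub_self[OF zer_hom[OF B1 Qa]] by simp
    obtain \<phi> where \<phi>: "\<phi> \<in> hom C Qb Qa" and \<phi>c: "cmp C \<phi> cb = \<alpha>"
      using cok_factor[OF cbk b \<alpha> \<alpha>b] unfolding Qb_def by blast
    have "cmp C (cmp C \<phi> h) ca = cmp C \<phi> (cmp C h ca)" using assoc[OF ca h \<phi>] by simp
    also have "\<dots> = cmp C (cmp C \<phi> cb) f0" using hc' assoc[OF f0 cb \<phi>] by simp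
    also have "\<dots> = cmp C (idm C Qa) ca" using \<phi>c \<alpha>f idl[OF ca] by simp
    finally have "cmp C (cmp C \<phi> h) ca = cmp C (idm C Qa) ca" .
    moreover have "cmp C \<phi> h \<in> hom C (cod C ca) Qa" "idm C Qa \<in> hom C (cod C ca) Qa"
      using comp[OF h \<phi>] id_hom[OF Qa] Qa_def by simp_all
    ultimately have "cmp C \<phi> h = idm C Qa" using epi_cancel[OF caepi] by blast
    thus ?thesis using that \<phi> by blast
  qed
  have hepi: "epi C h"
  proof (rule epi_zeroI[OF h])
    fix Y \<psi> assume \<psi>: "\<psi> \<in> hom C Qb Y" and \<psi>h: "cmp C \<psi> h = zer C Qa Y"
    have Y: "Y \<in> Ob C" using homD[OF \<psi>] by simp
    define x where "x = zer C Y Z"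
    have x: "x \<in> hom C Y Z" unfolding x_def using Y Z by blast
    have ox: "obj_c C x" unfolding obj_c_def using homD[OF x] Z by simp
    define u where "u = (zer C B0 Z, zer C B1 Y)"
    have mu: "mor1 C b x u" unfolding u_def by (rule mor1_zer[OF b x])
    define \<delta> where "\<delta> = cmp C \<psi> cb"
    have \<delta>: "\<delta> \<in> hom C B0 Y" unfolding \<delta>_def using comp[OF cb \<psi>] .
    have z: "zer C B0 Y \<in> hom C B0 Y" using B0 Y by blast
    have "cmp C \<delta> b = cmp C \<psi> (cmp C cb b)" unfolding \<delta>_def using assoc[OF b cb \<psi>] by simp
    also have "\<dots> = zer C B1 Y" using cok_zero[OF cbk b] cmp_zer_r[OF \<psi> B1] Qb_def by simp
    finally have \<delta>b: "cmp C \<delta> b = zer C B1 Y" .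
    have ar: "arr2 C b x u u d" if d: "d \<in> hom C B0 Y" and db: "cmp C d b = zer C B1 Y" for d
      unfolding arr2_def
    proof (intro conjI)
      show "mor1 C b x u" by fact
      show "mor1 C b x u" by fact
      show "d \<in> hom C (cod C b) (dom C x)" using d homD(2)[OF x] B0_def by simp
      show "sub C (snd u) (snd u) = cmp C d b" using db sub_self[OF zer_hom[OF B1 Y]] u_def by simp
      show "sub C (fst u) (fst u) = cmp C x d"
        using sub_self[OF zer_hom[OF B0 Z(1)]] cmp_zer_l[OF d Z(1)] u_def x_def by simp
    qed
    have "cmp C \<delta> f0 = cmp C \<psi> (cmp C h ca)" unfolding \<delta>_def using hc' assoc[OF f0 cb \<psi>] by simp
    also have "\<dots> = cmp C (cmp C \<psi> h) ca" using assoc[OF ca h \<psi>] .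
    also have "\<dots> = zer C A0 Y" using \<psi>h cmp_zer_l[OF ca Y] by simp
    also have "\<dots> = cmp C (zer C B0 Y) f0" using cmp_zer_l[OF f0 Y] by simp
    finally have "cmp C \<delta> (fst f) = cmp C (zer C B0 Y) (fst f)" unfolding f0_def .
    hence "\<delta> = zer C B0 Y"
      using fc_faith[OF FC ox mu mu ar[OF \<delta> \<delta>b] ar[OF z cmp_zer_l[OF b Y]]] by blast
    hence "cmp C \<psi> cb = zer C B0 Y" unfolding \<delta>_def .
    thus "\<psi> = zer C Qb Y" using epi_zero[OF cbepi cb \<psi>] by blast
  qed
  have hiso: "iso C h"
  proof -
    have "cmp C (cmp C h \<phi>) h = cmp C (idm C Qb) h"
      using assoc[OF h \<phi> h] \<phi>h idr[OF h] idl[OF h] by simp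
    moreover have "cmp C h \<phi> \<in> hom C (cod C h) Qb" "idm C Qb \<in> hom C (cod C h) Qb"
      using comp[OF \<phi> h] id_hom[OF Qb] homD(3)[OF h] by simp_all
    ultimately have "cmp C h \<phi> = idm C Qb" using epi_cancel[OF hepi] by blast
    thus ?thesis unfolding iso_def using \<phi> \<phi>h homD[OF h] by auto
  qed
  have gepi: "epi C g"
  proof -
    obtain P p1 p2 i1 i2 where p1: "p1 \<in> hom C P B1" and p2: "p2 \<in> hom C P A0"
      and i1: "i1 \<in> hom C B1 P" and i2: "i2 \<in> hom C A0 P"
      and p1i1: "cmp C p1 i1 = idm C B1" and p2i1: "cmp C p2 i1 = zer C B1 A0"
      and p1i2: "cmp C p1 i2 = zer C A0 B1" and p2i2: "cmp C p2 i2 = idm C A0"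
      and pex: "\<And>X f g. f \<in> hom C X B1 \<Longrightarrow> g \<in> hom C X A0 \<Longrightarrow> \<exists>u\<in>hom C X P. cmp C p1 u = f \<and> cmp C p2 u = g"
      and pun: "\<And>X u v. u \<in> hom C X P \<Longrightarrow> v \<in> hom C X P \<Longrightarrow> cmp C p1 u = cmp C p1 v \<Longrightarrow>
        cmp C p2 u = cmp C p2 v \<Longrightarrow> u = v"
      by (rule biprod[OF B1 A0], rule that, assumption+)
    obtain \<tau> where \<tau>: "\<tau> \<in> hom C A1 P" and p1\<tau>: "cmp C p1 \<tau> = f1" and p2\<tau>: "cmp C p2 \<tau> = a"
      using pex[OF f1 a] by blast
    obtain q where qk: "is_cokernel C \<tau> q" using has_cok homD(1)[OF \<tau>] by blast
    define X1 where "X1 = cod C q"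
    have q: "q \<in> hom C P X1" using cok_hom[OF qk \<tau>] unfolding X1_def .
    have X1: "X1 \<in> Ob C" using homD(5)[OF q] .
    have q\<tau>: "cmp C q \<tau> = zer C A1 X1" using cok_zero[OF qk \<tau>] unfolding X1_def .
    define \<sigma> where "\<sigma> = sub C (cmp C b p1) (cmp C f0 p2)"
    have bp1: "cmp C b p1 \<in> hom C P B0" using comp[OF p1 b] .
    have f0p2: "cmp C f0 p2 \<in> hom C P B0" using comp[OF p2 f0] .
    have \<sigma>: "\<sigma> \<in> hom C P B0" unfolding \<sigma>_def using bp1 f0p2 by blast
    have "cmp C \<sigma> \<tau> = sub C (cmp C (cmp C b p1) \<tau>) (cmp C (cmp C f0 p2) \<tau>)"
      unfolding \<sigma>_def using cmp_sub_l[OF \<tau> bp1 f0p2] .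
    also have "\<dots> = sub C (cmp C b f1) (cmp C f0 a)"
      using assoc[OF \<tau> p1 b] assoc[OF \<tau> p2 f0] p1\<tau> p2\<tau> by simp
    also have "\<dots> = zer C A1 B0" using fc sub_self[OF comp[OF a f0]] by simp
    finally have \<sigma>\<tau>: "cmp C \<sigma> \<tau> = zer C A1 B0" .
    obtain x where x: "x \<in> hom C X1 B0" and xq: "cmp C x q = \<sigma>"
      using cok_factor[OF qk \<tau> \<sigma> \<sigma>\<tau>] unfolding X1_def by blast
    have ox: "obj_c C x" unfolding obj_c_def using homD[OF x] ob B0_def unfolding obj_c_def by simp
    define w1 where "w1 = cmp C q i1"
    have w1: "w1 \<in> hom C B1 X1" unfolding w1_def using comp[OF i1 q] .
    have qi2: "cmp C q i2 \<in> hom C A0 X1" using comp[OF i2 q] .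
    define \<beta> where "\<beta> = neg C (cmp C q i2)"
    have \<beta>: "\<beta> \<in> hom C A0 X1" unfolding \<beta>_def using qi2 by blast
    have i1f1: "cmp C i1 f1 \<in> hom C A1 P" using comp[OF f1 i1] .
    have i2a: "cmp C i2 a \<in> hom C A1 P" using comp[OF a i2] .
    have "cmp C p1 (add C (cmp C i1 f1) (cmp C i2 a)) = add C (cmp C (cmp C p1 i1) f1) (cmp C (cmp C p1 i2) a)"
      using cmp_add_r[OF i1f1 i2a p1] assoc[OF f1 i1 p1] assoc[OF a i2 p1] by simp
    also have "\<dots> = f1" using p1i1 p1i2 idl[OF f1] cmp_zer_l[OF a B1] add_zer[OF f1] by simp
    finally have e1: "cmp C p1 (add C (cmp C i1 f1) (cmp C i2 a)) = cmp C p1 \<tau>" using p1\<tau> by simp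
    have "cmp C p2 (add C (cmp C i1 f1) (cmp C i2 a)) = add C (cmp C (cmp C p2 i1) f1) (cmp C (cmp C p2 i2) a)"
      using cmp_add_r[OF i1f1 i2a p2] assoc[OF f1 i1 p2] assoc[OF a i2 p2] by simp
    also have "\<dots> = a" using p2i1 p2i2 idl[OF a] cmp_zer_l[OF f1 A0] zer_add[OF a] by simp
    finally have e2: "cmp C p2 (add C (cmp C i1 f1) (cmp C i2 a)) = cmp C p2 \<tau>" using p2\<tau> by simp
    have \<tau>dec: "add C (cmp C i1 f1) (cmp C i2 a) = \<tau>"
      using pun[OF add_hom[OF i1f1 i2a] \<tau> e1 e2] .
    have "add C (cmp C w1 f1) (cmp C (cmp C q i2) a) = cmp C q \<tau>"
      unfolding w1_def using \<tau>dec cmp_add_r[OF i1f1 i2a q] assoc[OF f1 i1 q] assoc[OF a i2 q] by simp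
    hence "add C (cmp C w1 f1) (cmp C (cmp C q i2) a) = zer C A1 X1" using q\<tau> by simp
    hence "cmp C (cmp C q i2) a = neg C (cmp C w1 f1)"
      using neg_unique[OF comp[OF f1 w1] comp[OF a qi2]] by simp
    hence \<beta>a: "cmp C \<beta> a = cmp C w1 f1"
      unfolding \<beta>_def using cmp_neg_l[OF a qi2] neg_neg[OF comp[OF f1 w1]] by simp
    have "cmp C x \<beta> = neg C (cmp C x (cmp C q i2))" unfolding \<beta>_def using cmp_neg_r[OF qi2 x] .
    also have "\<dots> = neg C (cmp C \<sigma> i2)" using assoc[OF i2 q x] xq by simp
    also have "cmp C \<sigma> i2 = sub C (cmp C (cmp C b p1) i2) (cmp C (cmp C f0 p2) i2)"
      unfolding \<sigma>_def using cmp_sub_l[OF i2 bp1 f0p2] .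
    also have "\<dots> = sub C (cmp C b (cmp C p1 i2)) (cmp C f0 (cmp C p2 i2))"
      using assoc[OF i2 p1 b] assoc[OF i2 p2 f0] by simp
    also have "\<dots> = neg C f0" using p1i2 p2i2 cmp_zer_r[OF b A0] idr[OF f0] zer_sub[OF f0] by simp
    finally have x\<beta>: "cmp C x \<beta> = f0" using neg_neg[OF f0] by simp
    have "cmp C x w1 = cmp C \<sigma> i1" unfolding w1_def using assoc[OF i1 q x] xq by simp
    also have "\<dots> = sub C (cmp C (cmp C b p1) i1) (cmp C (cmp C f0 p2) i1)"
      unfolding \<sigma>_def using cmp_sub_l[OF i1 bp1 f0p2] .
    also have "\<dots> = sub C (cmp C b (cmp C p1 i1)) (cmp C f0 (cmp C p2 i1))"
      using assoc[OF i1 p1 b] assoc[OF i1 p2 f0] by simp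
    also have "\<dots> = b" using p1i1 p2i1 cmp_zer_r[OF f0 B1] idr[OF b] sub_zer[OF b] by simp
    finally have xw1: "cmp C x w1 = b" .
    define u where "u = (idm C B0, w1)"
    define v where "v = (zer C B0 B0, zer C B1 X1)"
    have mu: "mor1 C b x u" unfolding mor1_def u_def
      using homD(1)[OF b] homD(1)[OF x] id_hom[OF B0] w1 xw1 idl[OF b] homD(2,3)[OF x] B0_def B1_def
      by simp
    have mv: "mor1 C b x v" unfolding v_def by (rule mor1_zer[OF b x])
    have cu: "comp1 C u f = (f0, cmp C w1 f1)" unfolding comp1_def u_def f0_def f1_def
      using idl[OF f0] f0_def by simp
    have cv: "comp1 C v f = (zer C A0 B0, zer C A1 X1)" unfolding comp1_def v_def f0_def f1_def
      using cmp_zer_l[OF f0 B0] cmp_zer_l[OF f1 X1] f0_def f1_def by simp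
    have "arr2 C a x (comp1 C u f) (comp1 C v f) \<beta>"
      unfolding arr2_def
    proof (intro conjI)
      show "mor1 C a x (comp1 C u f)" using mor1_comp[OF mf mu] .
      show "mor1 C a x (comp1 C v f)" using mor1_comp[OF mf mv] .
      show "\<beta> \<in> hom C (cod C a) (dom C x)" using \<beta> homD(2)[OF x] A0_def by simp
      show "sub C (snd (comp1 C u f)) (snd (comp1 C v f)) = cmp C \<beta> a"
        using cu cv sub_zer[OF comp[OF f1 w1]] \<beta>a by simp
      show "sub C (fst (comp1 C u f)) (fst (comp1 C v f)) = cmp C x \<beta>"
        using cu cv sub_zer[OF f0] x\<beta> by simp
    qed
    then obtain \<alpha> where ar: "arr2 C b x u v \<alpha>"
      using fc_full[OF FC ox mu mv] by blast
    have \<alpha>: "\<alpha> \<in> hom C B0 X1" using ar homD(2)[OF x] unfolding arr2_def B0_def by simp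
    have "sub C w1 (zer C B1 X1) = cmp C \<alpha> b" using ar unfolding arr2_def u_def v_def by simp
    hence \<alpha>b: "cmp C \<alpha> b = w1" using sub_zer[OF w1] by simp
    have w1kb: "cmp C w1 kb = zer C Kb X1"
      using \<alpha>b[symmetric] assoc[OF kb b \<alpha>] ker_zero[OF kbk b] cmp_zer_r[OF \<alpha> Kb] Kb_def by simp
    obtain Pp \<pi> where Pp: "projective C Pp" and \<pi>: "\<pi> \<in> hom C Pp Kb" and \<pi>e: "epi C \<pi>"
      using EP Kb unfolding enough_projectives_def by blast
    have PpO: "Pp \<in> Ob C" using homD(4)[OF \<pi>] .
    have kb\<pi>: "cmp C kb \<pi> \<in> hom C Pp B1" using comp[OF \<pi> kb] .
    define z where "z = cmp C i1 (cmp C kb \<pi>)"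
    have z: "z \<in> hom C Pp P" unfolding z_def using comp[OF kb\<pi> i1] .
    have "cmp C q z = cmp C (cmp C w1 kb) \<pi>" unfolding z_def w1_def
      using assoc[OF kb\<pi> i1 q] assoc[OF \<pi> kb w1] w1_def by simp
    hence qz: "cmp C q z = zer C Pp (cod C q)" using w1kb cmp_zer_l[OF \<pi> X1] X1_def by simp
    obtain t where t: "t \<in> hom C Pp A1" and \<tau>t: "cmp C \<tau> t = z"
      using lift_cok[OF \<tau> qk Pp z qz] by blast
    have f1t: "cmp C f1 t = cmp C kb \<pi>"
      using p1\<tau> assoc[OF t \<tau> p1] \<tau>t z_def assoc[OF kb\<pi> i1 p1] p1i1 idl[OF kb\<pi>] by simp
    have "cmp C a t = cmp C (cmp C p2 i1) (cmp C kb \<pi>)"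
      using p2\<tau> assoc[OF t \<tau> p2] \<tau>t z_def assoc[OF kb\<pi> i1 p2] by simp
    hence at: "cmp C a t = zer C Pp A0" using p2i1 cmp_zer_l[OF kb\<pi> A0] by simp
    obtain s where s: "s \<in> hom C Pp Ka" and kas: "cmp C ka s = t"
      using ker_factor[OF kak a t at] unfolding Ka_def by blast
    have "cmp C kb (cmp C g s) = cmp C kb \<pi>"
      using assoc[OF s g kb] gc' assoc[OF s ka f1] kas f1t by simp
    moreover have "cmp C g s \<in> hom C Pp (dom C kb)" "\<pi> \<in> hom C Pp (dom C kb)"
      using comp[OF s g] \<pi> Kb_def by simp_all
    ultimately have gs: "cmp C g s = \<pi>" using mono_cancel[OF ker_mono[OF kbk]] by blast
    show "epi C g" unfolding epi_def
    proof (intro conjI allI impI)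
      show "g \<in> Ar C" using homD(1)[OF g] .
      fix Y u' v' assume u': "u' \<in> hom C (cod C g) Y" and v': "v' \<in> hom C (cod C g) Y"
        and e: "cmp C u' g = cmp C v' g"
      have u'': "u' \<in> hom C Kb Y" and v'': "v' \<in> hom C Kb Y" using u' v' homD(3)[OF g] by simp_all
      have "cmp C u' \<pi> = cmp C v' \<pi>" using gs assoc[OF s g u''] assoc[OF s g v''] e by metis
      moreover have "u' \<in> hom C (cod C \<pi>) Y" "v' \<in> hom C (cod C \<pi>) Y" using u'' v'' homD(3)[OF \<pi>] by simp_all
      ultimately show "u' = v'" using epi_cancel[OF \<pi>e] by blast
    qed
  qed
  show ?thesis using hiso gepi by blast
qed

end

context abcat
begin

lemma bwd:
  assumes EP: "enough_projectives C"
    and oa: "obj_c C a" and ob: "obj_c C b" and mf: "mor1 C a b f"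
    and kak: "is_kernel C a ka" and kbk: "is_kernel C b kb"
    and gh: "g \<in> hom C (dom C ka) (dom C kb)" and gc: "cmp C kb g = cmp C (snd f) ka"
    and cak: "is_cokernel C a ca" and cbk: "is_cokernel C b cb"
    and hh: "h \<in> hom C (cod C ca) (cod C cb)" and hc: "cmp C h ca = cmp C cb (fst f)"
    and hiso: "iso C h" and gepi: "epi C g"
  shows "fully_cofaithful_c C a b f"
proof -
  define A1 A0 B1 B0 Ka Kb Qa Qb where "A1 = dom C a" and "A0 = cod C a" and "B1 = dom C b"
    and "B0 = cod C b" and "Ka = dom C ka" and "Kb = dom C kb" and "Qa = cod C ca" and "Qb = cod C cb"
  define f0 f1 where "f0 = fst f" and "f1 = snd f"
  have a: "a \<in> hom C A1 A0" using oa ArD unfolding obj_c_def A1_def A0_def by blast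
  have b: "b \<in> hom C B1 B0" using ob ArD unfolding obj_c_def B1_def B0_def by blast
  have f0: "f0 \<in> hom C A0 B0" and f1: "f1 \<in> hom C A1 B1" and fc: "cmp C b f1 = cmp C f0 a"
    using mf unfolding mor1_def f0_def f1_def A0_def B0_def A1_def B1_def by blast+
  have ka: "ka \<in> hom C Ka A1" using ker_hom[OF kak a] unfolding Ka_def .
  have kb: "kb \<in> hom C Kb B1" using ker_hom[OF kbk b] unfolding Kb_def .
  have g: "g \<in> hom C Ka Kb" using gh unfolding Ka_def Kb_def .
  have ca: "ca \<in> hom C A0 Qa" using cok_hom[OF cak a] unfolding Qa_def .
  have cb: "cb \<in> hom C B0 Qb" using cok_hom[OF cbk b] unfolding Qb_def .
  have h: "h \<in> hom C Qa Qb" using hh unfolding Qa_def Qb_def .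
  have gc': "cmp C kb g = cmp C f1 ka" using gc unfolding f1_def .
  have hc': "cmp C h ca = cmp C cb f0" using hc unfolding f0_def .
  have A0: "A0 \<in> Ob C" and A1: "A1 \<in> Ob C" and B0: "B0 \<in> Ob C" and B1: "B1 \<in> Ob C"
    and Qa: "Qa \<in> Ob C" and Qb: "Qb \<in> Ob C" and Kb: "Kb \<in> Ob C" and Ka: "Ka \<in> Ob C"
    using homD[OF a] homD[OF b] homD[OF ca] homD[OF cb] homD[OF kb] homD[OF ka] by auto
  have caepi: "epi C ca" using cok_epi[OF cak] .
  have cbepi: "epi C cb" using cok_epi[OF cbk] .
  have B0p: "projective C B0" using ob unfolding obj_c_def B0_def by blast
  obtain hi where hi: "hi \<in> hom C Qb Qa" and hih: "cmp C hi h = idm C Qa" and hhi: "cmp C h hi = idm C Qb"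
    using hiso homD[OF h] unfolding iso_def by auto
  have kill: "y = zer C B0 Y" if y: "y \<in> hom C B0 Y" and yf0: "cmp C y f0 = zer C A0 Y"
    and yb: "cmp C y b = zer C B1 Y" for y Y
  proof -
    obtain \<phi> where \<phi>: "\<phi> \<in> hom C Qb Y" and \<phi>c: "cmp C \<phi> cb = y"
      using cok_factor[OF cbk b y yb] unfolding Qb_def by blast
    have Y: "Y \<in> Ob C" using homD[OF y] by simp
    have "cmp C (cmp C \<phi> h) ca = zer C A0 Y"
      using assoc[OF ca h \<phi>] hc' assoc[OF f0 cb \<phi>] \<phi>c yf0 by simp
    hence \<phi>h: "cmp C \<phi> h = zer C Qa Y" using epi_zero[OF caepi ca comp[OF h \<phi>]] by blast
    have "\<phi> = cmp C (cmp C \<phi> h) hi" using assoc[OF hi h \<phi>] hhi idr[OF \<phi>] by simp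
    hence "\<phi> = zer C Qb Y" using \<phi>h cmp_zer_l[OF hi Y] by simp
    thus ?thesis using \<phi>c cmp_zer_l[OF cb Y] by simp
  qed
  have eqI: "y = y'" if y: "y \<in> hom C B0 Y" and y': "y' \<in> hom C B0 Y"
    and e0: "cmp C y f0 = cmp C y' f0" and e1: "cmp C y b = cmp C y' b" for y y' Y
  proof -
    have "sub C y y' = zer C B0 Y"
    proof (rule kill)
      show "sub C y y' \<in> hom C B0 Y" using y y' by blast
      show "cmp C (sub C y y') f0 = zer C A0 Y" using cmp_sub_l[OF f0 y y'] e0 sub_self[OF comp[OF f0 y']] by simp
      show "cmp C (sub C y y') b = zer C B1 Y" using cmp_sub_l[OF b y y'] e1 sub_self[OF comp[OF b y']] by simp
    qed
    thus ?thesis using sub_zer_iff[OF y y'] by simp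
  qed
  \<comment> \<open>B0 is the pushout of a and f1\<close>
  obtain P p1 p2 i1 i2 where p1: "p1 \<in> hom C P A0" and p2: "p2 \<in> hom C P B1"
      and i1: "i1 \<in> hom C A0 P" and i2: "i2 \<in> hom C B1 P"
      and p1i1: "cmp C p1 i1 = idm C A0" and p2i1: "cmp C p2 i1 = zer C A0 B1"
      and p1i2: "cmp C p1 i2 = zer C B1 A0" and p2i2: "cmp C p2 i2 = idm C B1"
      and pex: "\<And>X f g. f \<in> hom C X A0 \<Longrightarrow> g \<in> hom C X B1 \<Longrightarrow> \<exists>u\<in>hom C X P. cmp C p1 u = f \<and> cmp C p2 u = g"
      and pun: "\<And>X u v. u \<in> hom C X P \<Longrightarrow> v \<in> hom C X P \<Longrightarrow> cmp C p1 u = cmp C p1 v \<Longrightarrow>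
        cmp C p2 u = cmp C p2 v \<Longrightarrow> u = v"
    by (rule biprod[OF A0 B1], rule that, assumption+)
  obtain \<tau> where \<tau>: "\<tau> \<in> hom C A1 P" and p1\<tau>: "cmp C p1 \<tau> = a" and p2\<tau>: "cmp C p2 \<tau> = f1"
    using pex[OF a f1] by blast
  obtain c where ck: "is_cokernel C \<tau> c" using has_cok homD(1)[OF \<tau>] by blast
  define E where "E = cod C c"
  have c: "c \<in> hom C P E" using cok_hom[OF ck \<tau>] unfolding E_def .
  have E: "E \<in> Ob C" using homD(5)[OF c] .
  have cepi: "epi C c" using cok_epi[OF ck] .
  have c\<tau>: "cmp C c \<tau> = zer C A1 E" using cok_zero[OF ck \<tau>] unfolding E_def .
  define \<sigma> where "\<sigma> = sub C (cmp C f0 p1) (cmp C b p2)"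
  have f0p1: "cmp C f0 p1 \<in> hom C P B0" using comp[OF p1 f0] .
  have bp2: "cmp C b p2 \<in> hom C P B0" using comp[OF p2 b] .
  have \<sigma>: "\<sigma> \<in> hom C P B0" unfolding \<sigma>_def using f0p1 bp2 by blast
  have "cmp C \<sigma> \<tau> = sub C (cmp C (cmp C f0 p1) \<tau>) (cmp C (cmp C b p2) \<tau>)"
    unfolding \<sigma>_def using cmp_sub_l[OF \<tau> f0p1 bp2] .
  also have "\<dots> = sub C (cmp C f0 a) (cmp C b f1)"
    using assoc[OF \<tau> p1 f0] assoc[OF \<tau> p2 b] p1\<tau> p2\<tau> by simp
  also have "\<dots> = zer C A1 B0" using fc sub_self[OF comp[OF a f0]] by simp
  finally have \<sigma>\<tau>: "cmp C \<sigma> \<tau> = zer C A1 B0" .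
  obtain s where s: "s \<in> hom C E B0" and sc: "cmp C s c = \<sigma>"
    using cok_factor[OF ck \<tau> \<sigma> \<sigma>\<tau>] unfolding E_def by blast
  have \<sigma>i1: "cmp C \<sigma> i1 = f0"
  proof -
    have "cmp C \<sigma> i1 = sub C (cmp C (cmp C f0 p1) i1) (cmp C (cmp C b p2) i1)"
      unfolding \<sigma>_def using cmp_sub_l[OF i1 f0p1 bp2] .
    also have "\<dots> = sub C (cmp C f0 (cmp C p1 i1)) (cmp C b (cmp C p2 i1))"
      using assoc[OF i1 p1 f0] assoc[OF i1 p2 b] by simp
    also have "\<dots> = f0" using p1i1 p2i1 cmp_zer_r[OF b A0] idr[OF f0] sub_zer[OF f0] by simp
    finally show ?thesis .
  qed
  have \<sigma>i2: "cmp C \<sigma> i2 = neg C b"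
  proof -
    have "cmp C \<sigma> i2 = sub C (cmp C (cmp C f0 p1) i2) (cmp C (cmp C b p2) i2)"
      unfolding \<sigma>_def using cmp_sub_l[OF i2 f0p1 bp2] .
    also have "\<dots> = sub C (cmp C f0 (cmp C p1 i2)) (cmp C b (cmp C p2 i2))"
      using assoc[OF i2 p1 f0] assoc[OF i2 p2 b] by simp
    also have "\<dots> = neg C b" using p1i2 p2i2 cmp_zer_r[OF f0 B1] idr[OF b] zer_sub[OF b] by simp
    finally show ?thesis .
  qed
  have \<sigma>epi: "epi C \<sigma>"
  proof (rule epi_zeroI[OF \<sigma>])
    fix Y y assume y: "y \<in> hom C B0 Y" and y\<sigma>: "cmp C y \<sigma> = zer C P Y"
    have Y: "Y \<in> Ob C" using homD[OF y] by simp
    have "cmp C y f0 = cmp C (cmp C y \<sigma>) i1" using \<sigma>i1 assoc[OF i1 \<sigma> y] by simp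
    hence yf0: "cmp C y f0 = zer C A0 Y" using y\<sigma> cmp_zer_l[OF i1 Y] by simp
    have "cmp C y (neg C b) = cmp C (cmp C y \<sigma>) i2" using \<sigma>i2 assoc[OF i2 \<sigma> y] by simp
    hence "neg C (cmp C y b) = zer C B1 Y" using y\<sigma> cmp_zer_l[OF i2 Y] cmp_neg_r[OF b y] by simp
    hence "cmp C y b = zer C B1 Y" using neg_neg[OF comp[OF b y]] neg_zer[OF B1 Y] by metis
    thus "y = zer C B0 Y" using kill[OF y yf0] by blast
  qed
  have sepi: "epi C s" unfolding epi_def
  proof (intro conjI allI impI)
    show "s \<in> Ar C" using homD(1)[OF s] .
    fix Y u' v' assume u': "u' \<in> hom C (cod C s) Y" and v': "v' \<in> hom C (cod C s) Y"
      and e: "cmp C u' s = cmp C v' s"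
    have u'': "u' \<in> hom C B0 Y" and v'': "v' \<in> hom C B0 Y" using u' v' homD(3)[OF s] by simp_all
    have "cmp C u' \<sigma> = cmp C v' \<sigma>" using sc assoc[OF c s u''] assoc[OF c s v''] e by metis
    moreover have "u' \<in> hom C (cod C \<sigma>) Y" "v' \<in> hom C (cod C \<sigma>) Y" using u'' v'' homD(3)[OF \<sigma>] by simp_all
    ultimately show "u' = v'" using epi_cancel[OF \<sigma>epi] by blast
  qed
  have smono: "mono C s"
  proof (rule mono_zeroI[OF s])
    fix Y y assume y: "y \<in> hom C Y E" and sy: "cmp C s y = zer C Y B0"
    have Y: "Y \<in> Ob C" using homD[OF y] by simp
    obtain Pp \<pi> where Pp: "projective C Pp" and \<pi>: "\<pi> \<in> hom C Pp Y" and \<pi>e: "epi C \<pi>"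
      using EP Y unfolding enough_projectives_def by blast
    have PpO: "Pp \<in> Ob C" using homD(4)[OF \<pi>] .
    have y\<pi>: "cmp C y \<pi> \<in> hom C Pp E" using comp[OF \<pi> y] .
    obtain z where z: "z \<in> hom C Pp P" and cz: "cmp C c z = cmp C y \<pi>"
      using proj_lift[OF Pp cepi c y\<pi>] by blast
    define z1 z2 where "z1 = cmp C p1 z" and "z2 = cmp C p2 z"
    have z1: "z1 \<in> hom C Pp A0" unfolding z1_def using comp[OF z p1] .
    have z2: "z2 \<in> hom C Pp B1" unfolding z2_def using comp[OF z p2] .
    have "cmp C \<sigma> z = cmp C (cmp C s y) \<pi>" using sc cz assoc[OF z c s] assoc[OF \<pi> y s] by simp
    hence "cmp C \<sigma> z = zer C Pp B0" using sy cmp_zer_l[OF \<pi> B0] by simp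
    moreover have "cmp C \<sigma> z = sub C (cmp C f0 z1) (cmp C b z2)"
      unfolding \<sigma>_def z1_def z2_def using cmp_sub_l[OF z f0p1 bp2] assoc[OF z p1 f0] assoc[OF z p2 b] by simp
    ultimately have fz: "cmp C f0 z1 = cmp C b z2" using sub_zer_iff[OF comp[OF z1 f0] comp[OF z2 b]] by simp
    have "cmp C h (cmp C ca z1) = cmp C cb (cmp C b z2)"
      using assoc[OF z1 ca h] hc' assoc[OF z1 f0 cb] fz by simp
    also have "\<dots> = zer C Pp Qb" using assoc[OF z2 b cb] cok_zero[OF cbk b] cmp_zer_l[OF z2 Qb] Qb_def by simp
    finally have "cmp C h (cmp C ca z1) = zer C Pp Qb" .
    hence "cmp C ca z1 = zer C Pp Qa"
      using assoc[OF comp[OF z1 ca] h hi] hih idl[OF comp[OF z1 ca]] cmp_zer_r[OF hi PpO] by simp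
    then obtain t where t: "t \<in> hom C Pp A1" and at: "cmp C a t = z1"
      using lift_cok[OF a cak Pp z1] Qa_def by blast
    have f1t: "cmp C f1 t \<in> hom C Pp B1" using comp[OF t f1] .
    have "cmp C b (sub C z2 (cmp C f1 t)) = sub C (cmp C b z2) (cmp C b (cmp C f1 t))"
      using cmp_sub_r[OF z2 f1t b] .
    also have "\<dots> = zer C Pp B0" using assoc[OF t f1 b] fc assoc[OF t a f0] at fz sub_self[OF comp[OF z2 b]] by simp
    finally have "cmp C b (sub C z2 (cmp C f1 t)) = zer C Pp B0" .
    then obtain r where r: "r \<in> hom C Pp Kb" and kbr: "cmp C kb r = sub C z2 (cmp C f1 t)"
      using ker_factor[OF kbk b sub_hom[OF z2 f1t]] Kb_def by blast
    obtain r' where r': "r' \<in> hom C Pp Ka" and gr': "cmp C g r' = r"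
      using proj_lift[OF Pp gepi g r] by blast
    have kar': "cmp C ka r' \<in> hom C Pp A1" using comp[OF r' ka] .
    define t' where "t' = add C t (cmp C ka r')"
    have t': "t' \<in> hom C Pp A1" unfolding t'_def using t kar' by blast
    have "cmp C p1 (cmp C \<tau> t') = cmp C a t'" using assoc[OF t' \<tau> p1] p1\<tau> by simp
    also have "\<dots> = add C z1 (cmp C (cmp C a ka) r')"
      unfolding t'_def using cmp_add_r[OF t kar' a] at assoc[OF r' ka a] by simp
    also have "\<dots> = z1" using ker_zero[OF kak a] Ka_def cmp_zer_l[OF r' A0] add_zer[OF z1] by simp
    finally have e1: "cmp C p1 (cmp C \<tau> t') = cmp C p1 z" unfolding z1_def .
    have "cmp C p2 (cmp C \<tau> t') = cmp C f1 t'" using assoc[OF t' \<tau> p2] p2\<tau> by simp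
    also have "\<dots> = add C (cmp C f1 t) (cmp C (cmp C f1 ka) r')"
      unfolding t'_def using cmp_add_r[OF t kar' f1] assoc[OF r' ka f1] by simp
    also have "cmp C (cmp C f1 ka) r' = sub C z2 (cmp C f1 t)"
      using gc' assoc[OF r' g kb] gr' kbr by simp
    also have "add C (cmp C f1 t) (sub C z2 (cmp C f1 t)) = z2" using add_sub_cancel[OF f1t z2] .
    finally have e2: "cmp C p2 (cmp C \<tau> t') = cmp C p2 z" unfolding z2_def .
    have "cmp C \<tau> t' = z" using pun[OF comp[OF t' \<tau>] z e1 e2] .
    hence "cmp C y \<pi> = cmp C (cmp C c \<tau>) t'" using cz assoc[OF t' \<tau> c] by simp
    hence "cmp C y \<pi> = zer C Pp E" using c\<tau> cmp_zer_l[OF t' E] by simp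
    thus "y = zer C Y E" using epi_zero[OF \<pi>e \<pi> y] by blast
  qed
  obtain j where j: "j \<in> hom C B0 E" and sj: "cmp C s j = idm C B0"
    using proj_lift[OF B0p sepi s id_hom[OF B0]] by blast
  have js: "cmp C j s = idm C E"
  proof -
    have "cmp C s (cmp C j s) = cmp C s (idm C E)"
      using assoc[OF s j s] sj idl[OF s] idr[OF s] by simp
    moreover have "cmp C j s \<in> hom C E (dom C s)" "idm C E \<in> hom C E (dom C s)"
      using comp[OF s j] id_hom[OF E] homD(2)[OF s] by simp_all
    ultimately show ?thesis using mono_cancel[OF smono] by blast
  qed
  have ext: "\<exists>\<alpha>\<in>hom C B0 X. cmp C \<alpha> f0 = \<beta> \<and> cmp C \<alpha> b = w"
    if \<beta>: "\<beta> \<in> hom C A0 X" and w: "w \<in> hom C B1 X" and \<beta>w: "cmp C \<beta> a = cmp C w f1" for \<beta> w X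
  proof -
    have X: "X \<in> Ob C" using homD[OF \<beta>] by simp
    define t where "t = sub C (cmp C \<beta> p1) (cmp C w p2)"
    have \<beta>p1: "cmp C \<beta> p1 \<in> hom C P X" using comp[OF p1 \<beta>] .
    have wp2: "cmp C w p2 \<in> hom C P X" using comp[OF p2 w] .
    have t: "t \<in> hom C P X" unfolding t_def using \<beta>p1 wp2 by blast
    have "cmp C t \<tau> = sub C (cmp C \<beta> a) (cmp C w f1)" unfolding t_def
      using cmp_sub_l[OF \<tau> \<beta>p1 wp2] assoc[OF \<tau> p1 \<beta>] assoc[OF \<tau> p2 w] p1\<tau> p2\<tau> by simp
    hence t\<tau>: "cmp C t \<tau> = zer C A1 X" using \<beta>w sub_self[OF comp[OF f1 w]] by simp
    obtain t' where t': "t' \<in> hom C E X" and t'c: "cmp C t' c = t"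
      using cok_factor[OF ck \<tau> t t\<tau>] unfolding E_def by blast
    define \<alpha> where "\<alpha> = cmp C t' j"
    have \<alpha>: "\<alpha> \<in> hom C B0 X" unfolding \<alpha>_def using comp[OF j t'] .
    have "cmp C \<alpha> \<sigma> = cmp C t' (cmp C (cmp C j s) c)" unfolding \<alpha>_def
      using sc assoc[OF c s j] assoc[OF \<sigma> j t'] by simp
    hence \<alpha>\<sigma>: "cmp C \<alpha> \<sigma> = t" using js idl[OF c] t'c by simp
    have "cmp C \<alpha> f0 = cmp C t i1" using \<alpha>\<sigma> \<sigma>i1 assoc[OF i1 \<sigma> \<alpha>] by simp
    also have "\<dots> = sub C (cmp C \<beta> (cmp C p1 i1)) (cmp C w (cmp C p2 i1))" unfolding t_def
      using cmp_sub_l[OF i1 \<beta>p1 wp2] assoc[OF i1 p1 \<beta>] assoc[OF i1 p2 w] by simp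
    also have "\<dots> = \<beta>" using p1i1 p2i1 idr[OF \<beta>] cmp_zer_r[OF w A0] sub_zer[OF \<beta>] by simp
    finally have \<alpha>f0: "cmp C \<alpha> f0 = \<beta>" .
    have "cmp C \<alpha> (neg C b) = cmp C t i2" using \<alpha>\<sigma> \<sigma>i2 assoc[OF i2 \<sigma> \<alpha>] by simp
    also have "\<dots> = sub C (cmp C \<beta> (cmp C p1 i2)) (cmp C w (cmp C p2 i2))" unfolding t_def
      using cmp_sub_l[OF i2 \<beta>p1 wp2] assoc[OF i2 p1 \<beta>] assoc[OF i2 p2 w] by simp
    also have "\<dots> = neg C w" using p1i2 p2i2 idr[OF w] cmp_zer_r[OF \<beta> B1] zer_sub[OF w] by simp
    finally have "neg C (cmp C \<alpha> b) = neg C w" using cmp_neg_r[OF b \<alpha>] by simp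
    hence "cmp C \<alpha> b = w" using neg_inj[OF comp[OF b \<alpha>] w] by blast
    thus ?thesis using \<alpha> \<alpha>f0 by blast
  qed
  show ?thesis unfolding fully_cofaithful_c_def
  proof (intro allI impI)
    fix x u v assume ox: "obj_c C x" and mu: "mor1 C b x u" and mv: "mor1 C b x v"
    define X1 X0 where "X1 = dom C x" and "X0 = cod C x"
    have x: "x \<in> hom C X1 X0" using ox ArD unfolding obj_c_def X1_def X0_def by blast
    have X1: "X1 \<in> Ob C" and X0: "X0 \<in> Ob C" using homD[OF x] by auto
    have u0: "fst u \<in> hom C B0 X0" and u1: "snd u \<in> hom C B1 X1" and uc: "cmp C x (snd u) = cmp C (fst u) b"
      using mu unfolding mor1_def B0_def B1_def X0_def X1_def by blast+
    have v0: "fst v \<in> hom C B0 X0" and v1: "snd v \<in> hom C B1 X1" and vc: "cmp C x (snd v) = cmp C (fst v) b"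
      using mv unfolding mor1_def B0_def B1_def X0_def X1_def by blast+
    have FA: "\<forall>\<alpha> \<alpha>'. arr2 C b x u v \<alpha> \<longrightarrow> arr2 C b x u v \<alpha>' \<longrightarrow>
              cmp C \<alpha> (fst f) = cmp C \<alpha>' (fst f) \<longrightarrow> \<alpha> = \<alpha>'"
    proof (intro allI impI)
      fix \<alpha> \<alpha>' assume ar: "arr2 C b x u v \<alpha>" and ar': "arr2 C b x u v \<alpha>'"
        and e: "cmp C \<alpha> (fst f) = cmp C \<alpha>' (fst f)"
      have \<alpha>: "\<alpha> \<in> hom C B0 X1" and \<alpha>b: "sub C (snd u) (snd v) = cmp C \<alpha> b"
        using ar unfolding arr2_def B0_def X1_def by blast+
      have \<alpha>': "\<alpha>' \<in> hom C B0 X1" and \<alpha>'b: "sub C (snd u) (snd v) = cmp C \<alpha>' b"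
        using ar' unfolding arr2_def B0_def X1_def by blast+
      define d where "d = sub C \<alpha> \<alpha>'"
      have d: "d \<in> hom C B0 X1" unfolding d_def using \<alpha> \<alpha>' by blast
      have "cmp C d b = zer C B1 X1" unfolding d_def
        using cmp_sub_l[OF b \<alpha> \<alpha>'] \<alpha>b \<alpha>'b sub_self[OF comp[OF b \<alpha>]] by simp
      moreover have "cmp C d f0 = zer C A0 X1" unfolding d_def
        using cmp_sub_l[OF f0 \<alpha> \<alpha>'] e sub_self[OF comp[OF f0 \<alpha>']] f0_def by simp
      ultimately have "d = zer C B0 X1" using kill[OF d] by blast
      thus "\<alpha> = \<alpha>'" using sub_zer_iff[OF \<alpha> \<alpha>'] d_def by simp
    qed
    have FU: "\<forall>\<beta>. arr2 C a x (comp1 C u f) (comp1 C v f) \<beta> \<longrightarrow>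
              (\<exists>\<alpha>. arr2 C b x u v \<alpha> \<and> cmp C \<alpha> (fst f) = \<beta>)"
    proof (intro allI impI)
      fix \<beta> assume ar: "arr2 C a x (comp1 C u f) (comp1 C v f) \<beta>"
      have \<beta>: "\<beta> \<in> hom C A0 X1" using ar unfolding arr2_def A0_def X1_def by blast
      have \<beta>1: "sub C (cmp C (snd u) f1) (cmp C (snd v) f1) = cmp C \<beta> a"
        and \<beta>0: "sub C (cmp C (fst u) f0) (cmp C (fst v) f0) = cmp C x \<beta>"
        using ar unfolding arr2_def comp1_def f0_def f1_def by simp_all
      define w0 w1 where "w0 = sub C (fst u) (fst v)" and "w1 = sub C (snd u) (snd v)"
      have w0: "w0 \<in> hom C B0 X0" unfolding w0_def using u0 v0 by blast
      have w1: "w1 \<in> hom C B1 X1" unfolding w1_def using u1 v1 by blast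
      have w1f1: "cmp C w1 f1 = cmp C \<beta> a" unfolding w1_def using cmp_sub_l[OF f1 u1 v1] \<beta>1 by simp
      have w0f0: "cmp C w0 f0 = cmp C x \<beta>" unfolding w0_def using cmp_sub_l[OF f0 u0 v0] \<beta>0 by simp
      have xw1: "cmp C x w1 = cmp C w0 b" unfolding w0_def w1_def
        using cmp_sub_r[OF u1 v1 x] cmp_sub_l[OF b u0 v0] uc vc by simp
      obtain \<alpha> where \<alpha>: "\<alpha> \<in> hom C B0 X1" and \<alpha>f0: "cmp C \<alpha> f0 = \<beta>" and \<alpha>b: "cmp C \<alpha> b = w1"
        using ext[OF \<beta> w1 w1f1[symmetric]] by blast
      have x\<alpha>: "cmp C x \<alpha> = w0"
      proof (rule eqI[OF comp[OF \<alpha> x] w0])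
        show "cmp C (cmp C x \<alpha>) f0 = cmp C w0 f0" using assoc[OF f0 \<alpha> x] \<alpha>f0 w0f0 by simp
        show "cmp C (cmp C x \<alpha>) b = cmp C w0 b" using assoc[OF b \<alpha> x] \<alpha>b xw1 by simp
      qed
      have "arr2 C b x u v \<alpha>" unfolding arr2_def
        using mu mv \<alpha> \<alpha>b x\<alpha> w0_def w1_def B0_def X1_def by simp
      thus "\<exists>\<alpha>. arr2 C b x u v \<alpha> \<and> cmp C \<alpha> (fst f) = \<beta>" using \<alpha>f0 f0_def by blast
    qed
    show "(\<forall>\<beta>. arr2 C a x (comp1 C u f) (comp1 C v f) \<beta> \<longrightarrow>
              (\<exists>\<alpha>. arr2 C b x u v \<alpha> \<and> cmp C \<alpha> (fst f) = \<beta>)) \<and>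
           (\<forall>\<alpha> \<alpha>'. arr2 C b x u v \<alpha> \<longrightarrow> arr2 C b x u v \<alpha>' \<longrightarrow>
              cmp C \<alpha> (fst f) = cmp C \<alpha>' (fst f) \<longrightarrow> \<alpha> = \<alpha>')" using FA FU by blast
  qed
qed

end

theorem lemma3p4:
  fixes C :: "('o, 'm) cat" and a b ka kb ca cb g h :: 'm and f :: "'m \<times> 'm"
  assumes "abelian C" and "enough_projectives C"
    and "obj_c C a" and "obj_c C b" and "mor1 C a b f"
    and "is_kernel C a ka" and "is_kernel C b kb"
    and "g \<in> hom C (dom C ka) (dom C kb)" and "cmp C kb g = cmp C (snd f) ka"
    and "is_cokernel C a ca" and "is_cokernel C b cb"
    and "h \<in> hom C (cod C ca) (cod C cb)" and "cmp C h ca = cmp C cb (fst f)"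
  shows "fully_cofaithful_c C a b f \<longleftrightarrow> iso C h \<and> epi C g"
proof -
  interpret abcat C by (unfold_locales) (rule assms(1))
  show ?thesis
  proof
    assume "fully_cofaithful_c C a b f"
    thus "iso C h \<and> epi C g" using fwd[OF assms(2-13)] by blast
  next
    assume "iso C h \<and> epi C g"
    thus "fully_cofaithful_c C a b f" using bwd[OF assms(2-13)] by blast
  qed
qed

end
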